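(* Let $\mathcal{K}\subseteq\mathbb{R}^n$ be a proper convex cone with a $\nu$-LHSCB $f$, and let $A\in\mathbb{R}^{m\times n}$ (full row rank), $\mathbf{b}\in\mathbb{R}^m$, $\mathbf{c}\in\mathbb{R}^n$. Let $0<\eta\le\frac14$, $\vartheta=\frac{\eta/2}{\sqrt\nu+1}$, $\tau>0$, and $(\mathbf{x},\mathbf{y},\mathbf{s})\in\mathcal{N}(\eta,\tau)$. Let $(\Delta\mathbf{x},\Delta\mathbf{y},\Delta\mathbf{s})$ be the solution of the Newton system at $(\mathbf{x},\mathbf{y},\mathbf{s})$ with parameter $\tau$, let $\alpha\in(0,1]$, and set $\mathbf{x}^+=\mathbf{x}+\alpha\Delta\mathbf{x}$, $\mathbf{s}^+=\mathbf{s}+\alpha\Delta\mathbf{s}$, $\mathbf{y}^+=\mathbf{y}+\alpha\Delta\mathbf{y}$, and $\tau^+=(1-\vartheta)\tau$. Then \[\|\mathbf{s}^++\tau^+g(\mathbf{x}^+)\|^*_{\mathbf{x}^+}\le 2\eta\tau^+.\]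
   Context: $\mathcal{K}\subseteq\mathbb{R}^n$ is a proper (closed, convex, pointed, full-dimensional) cone with interior $\mathcal{K}^\circ$ and dual cone $\mathcal{K}^*$. A $\nu$-LHSCB for $\mathcal{K}$ is a strictly convex, three times differentiable $f:\mathcal{K}^\circ\to\mathbb{R}$ with $f(\mathbf{x})\to\infty$ at the boundary of $\mathcal{K}$, $|D^3f(\mathbf{x})[\mathbf{h},\mathbf{h},\mathbf{h}]|\le 2\,(D^2f(\mathbf{x})[\mathbf{h},\mathbf{h}])^{3/2}$, $\nu=\sup_{\mathbf{x}\in\mathcal{K}^\circ}g(\mathbf{x})^\top H(\mathbf{x})^{-1}g(\mathbf{x})<\infty$, and $f(t\mathbf{x})=f(\mathbf{x})-\nu\ln t$ for $t>0$; $g,H$ are its gradient and Hessian. $\|\mathbf{v}\|^*_{\mathbf{x}}=\sqrt{\mathbf{v}^\top H(\mathbf{x})^{-1}\mathbf{v}}$. $\mathcal{F}^\circ=\{(\mathbf{x},\mathbf{y},\mathbf{s})\in\mathcal{K}^\circ\times\mathbb{R}^m\times(\mathcal{K}^* )^\circ:A\mathbf{x}=\mathbf{b},A^\top\mathbf{y}+\mathbf{s}=\mathbf{c}\}$, $\mathcal{N}(\eta,\tau)=\{(\mathbf{x},\mathbf{y},\mathbf{s})\in\mathcal{F}^\circ:\|\mathbf{s}+\tau g(\mathbf{x})\|^*_{\mathbf{x}}\le\eta\tau\}$. The Newton system at $(\mathbf{x},\mathbf{y},\mathbf{s})$ with parameter $\tau$ is $A\Delta\mathbf{x}=\mathbf{0}$,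 $A^\top\Delta\mathbf{y}+\Delta\mathbf{s}=\mathbf{0}$, $\tau H(\mathbf{x})\Delta\mathbf{x}+\Delta\mathbf{s}=-(\mathbf{s}+\tau g(\mathbf{x}))$. *)

theory Defs
  imports "HOL-Analysis.Analysis"
begin

definition proper_cone :: "(real^'n) set \<Rightarrow> bool" where
  "proper_cone K \<longleftrightarrow> closed K \<and> convex K \<and> cone K \<and>
     K \<inter> uminus ` K = {0} \<and> interior K \<noteq> {}"

definition dual_cone :: "(real^'n) set \<Rightarrow> (real^'n) set" where
  "dual_cone K = {s. \<forall>x\<in>K. x \<bullet> s \<ge> 0}"

definition strictly_convex_on :: "(real^'n) set \<Rightarrow> (real^'n \<Rightarrow> real) \<Rightarrow> bool" where
  "strictly_convex_on S f \<longleftrightarrow> convex S \<and>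
     (\<forall>x\<in>S. \<forall>y\<in>S. x \<noteq> y \<longrightarrow> (\<forall>t::real. 0 < t \<and> t < 1 \<longrightarrow>
        f ((1 - t) *\<^sub>R x + t *\<^sub>R y) < (1 - t) * f x + t * f y))"

text \<open>The Hessian is required to be
  invertible, as presupposed by the definition of \<nu> via H^{-1}.\<close>
definition lhscb :: "(real^'n) set \<Rightarrow> (real^'n \<Rightarrow> real) \<Rightarrow> (real^'n \<Rightarrow> real^'n)
    \<Rightarrow> (real^'n \<Rightarrow> real^'n^'n) \<Rightarrow> real \<Rightarrow> bool" where
  "lhscb K f g H \<nu> \<longleftrightarrow>
     strictly_convex_on (interior K) f \<and>
     (\<forall>x\<in>interior K. (f has_derivative (\<lambda>h. g x \<bullet> h)) (at x)) \<and>
     (\<forall>x\<in>interior K. (g has_derivative (\<lambda>h. H x *v h)) (at x)) \<and>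
     (\<forall>x\<in>interior K. \<exists>D3. (H has_derivative D3) (at x) \<and>
         (\<forall>h. \<bar>h \<bullet> (D3 h *v h)\<bar> \<le> 2 * (h \<bullet> (H x *v h)) powr (3/2))) \<and>
     (\<forall>x\<in>interior K. invertible (H x)) \<and>
     (\<forall>p\<in>frontier K. filterlim f at_top (at p within interior K)) \<and>
     bdd_above ((\<lambda>x. g x \<bullet> (matrix_inv (H x) *v g x)) ` interior K) \<and>
     \<nu> = (SUP x\<in>interior K. g x \<bullet> (matrix_inv (H x) *v g x)) \<and>
     (\<forall>x\<in>interior K. \<forall>t>0. f (t *\<^sub>R x) = f x - \<nu> * ln t)"

definition dual_local_norm :: "(real^'n \<Rightarrow> real^'n^'n) \<Rightarrow> real^'n \<Rightarrow> real^'n \<Rightarrow> real" where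
  "dual_local_norm H x v = sqrt (v \<bullet> (matrix_inv (H x) *v v))"

definition strictly_feasible ::
  "(real^'n) set \<Rightarrow> real^'n^'m \<Rightarrow> real^'m \<Rightarrow> real^'n \<Rightarrow> ((real^'n) \<times> (real^'m) \<times> (real^'n)) set" where
  "strictly_feasible K A b c = {(x, y, s). x \<in> interior K \<and> s \<in> interior (dual_cone K) \<and>
      A *v x = b \<and> transpose A *v y + s = c}"

definition neighborhood ::
  "(real^'n) set \<Rightarrow> real^'n^'m \<Rightarrow> real^'m \<Rightarrow> real^'n \<Rightarrow> (real^'n \<Rightarrow> real^'n)
    \<Rightarrow> (real^'n \<Rightarrow> real^'n^'n) \<Rightarrow> real \<Rightarrow> real \<Rightarrow> ((real^'n) \<times> (real^'m) \<times> (real^'n)) set" where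
  "neighborhood K A b c g H \<eta> \<tau> = {(x, y, s) \<in> strictly_feasible K A b c.
      dual_local_norm H x (s + \<tau> *\<^sub>R g x) \<le> \<eta> * \<tau>}"

definition newton_system ::
  "real^'n^'m \<Rightarrow> (real^'n \<Rightarrow> real^'n) \<Rightarrow> (real^'n \<Rightarrow> real^'n^'n) \<Rightarrow> real
    \<Rightarrow> real^'n \<Rightarrow> real^'m \<Rightarrow> real^'n \<Rightarrow> real^'n \<Rightarrow> real^'m \<Rightarrow> real^'n \<Rightarrow> bool" where
  "newton_system A g H \<tau> x y s dx dy ds \<longleftrightarrow>
     A *v dx = 0 \<and> transpose A *v dy + ds = 0 \<and>
     \<tau> *\<^sub>R (H x *v dx) + ds = - (s + \<tau> *\<^sub>R g x)"

end

theory Submission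
  imports Defs
begin

definition qf :: "real^'n^'n \<Rightarrow> real^'n \<Rightarrow> real" where
  "qf M h = h \<bullet> (M *v h)"

definition symm :: "real^'n^'n \<Rightarrow> bool" where
  "symm M \<longleftrightarrow> (\<forall>u v. u \<bullet> (M *v v) = v \<bullet> (M *v u))"

definition psd :: "real^'n^'n \<Rightarrow> bool" where
  "psd M \<longleftrightarrow> (\<forall>h. 0 \<le> qf M h)"

lemma qf_add: "symm M \<Longrightarrow> qf M (u + v) = qf M u + 2 * (u \<bullet> (M *v v)) + qf M v"
  unfolding qf_def symm_def by (simp add: matrix_vector_right_distrib inner_add_left inner_add_right)

lemma qf_diff: "symm M \<Longrightarrow> qf M (u - v) = qf M u - 2 * (u \<bullet> (M *v v)) + qf M v"
  unfolding qf_def symm_def by (simp add: matrix_vector_mult_diff_distrib inner_diff_left inner_diff_right)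

lemma qf_scale: "qf M (c *\<^sub>R u) = c^2 * qf M u"
  unfolding qf_def by (simp add: matrix_vector_mult_scaleR power2_eq_square)

lemma qf_cs:
  assumes "symm M" "psd M"
  shows "(u \<bullet> (M *v v))^2 \<le> qf M u * qf M v"
proof -
  define b where "b = u \<bullet> (M *v v)"
  have key: "0 \<le> qf M u - 2 * l * b + l^2 * qf M v" for l
  proof -
    have "0 \<le> qf M (u - l *\<^sub>R v)" using assms(2) psd_def by blast
    also have "\<dots> = qf M u - 2 * l * b + l^2 * qf M v"
      using qf_diff[OF assms(1), of u "l *\<^sub>R v"] qf_scale[of M l v]
      by (simp add: b_def matrix_vector_mult_scaleR)
    finally show ?thesis .
  qed
  have qv: "0 \<le> qf M v" "0 \<le> qf M u" using assms(2) psd_def by auto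
  show ?thesis
  proof (cases "qf M v = 0")
    case True
    have "b = 0"
    proof (rule ccontr)
      assume "b \<noteq> 0"
      have "0 \<le> qf M u - 2 * ((qf M u + 1) / (2*b)) * b" using key[of "(qf M u + 1) / (2*b)"] True by simp
      also have "\<dots> = -1" using \<open>b \<noteq> 0\<close> by (simp add: field_simps)
      finally show False by simp
    qed
    then show ?thesis using qv by (simp add: b_def)
  next
    case False
    hence pos: "qf M v > 0" using qv by simp
    have "0 \<le> qf M u - 2 * (b / qf M v) * b + (b / qf M v)^2 * qf M v" by (rule key)
    also have "\<dots> = qf M u - b^2 / qf M v" using pos by (simp add: field_simps power2_eq_square)
    finally have "b^2 / qf M v \<le> qf M u" by simp
    hence "b^2 \<le> qf M u * qf M v" using pos by (simp add: field_simps)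
    then show ?thesis by (simp add: b_def)
  qed
qed

lemma qf_cs_abs:
  assumes "symm M" "psd M"
  shows "\<bar>u \<bullet> (M *v v)\<bar> \<le> sqrt (qf M u) * sqrt (qf M v)"
proof -
  have "\<bar>u \<bullet> (M *v v)\<bar> = sqrt ((u \<bullet> (M *v v))^2)" by simp
  also have "\<dots> \<le> sqrt (qf M u * qf M v)" using qf_cs[OF assms] real_sqrt_le_mono by blast
  also have "\<dots> = sqrt (qf M u) * sqrt (qf M v)" by (simp add: real_sqrt_mult)
  finally show ?thesis .
qed

lemma qf_tri:
  assumes "symm M" "psd M"
  shows "sqrt (qf M (u + v)) \<le> sqrt (qf M u) + sqrt (qf M v)"
proof -
  have qv: "0 \<le> qf M v" "0 \<le> qf M u" using assms(2) psd_def by auto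
  have "qf M (u + v) = qf M u + 2 * (u \<bullet> (M *v v)) + qf M v" using qf_add[OF assms(1)] .
  also have "\<dots> \<le> qf M u + 2 * (sqrt (qf M u) * sqrt (qf M v)) + qf M v"
    using qf_cs_abs[OF assms, of u v] by linarith
  also have "\<dots> = (sqrt (qf M u) + sqrt (qf M v))^2"
    using qv by (simp add: power2_eq_square algebra_simps)
  finally show ?thesis using qv by (simp add: real_le_lsqrt)
qed

lemma qf_sqrt_scale: "sqrt (qf M (c *\<^sub>R u)) = \<bar>c\<bar> * sqrt (qf M u)"
  by (simp add: qf_scale real_sqrt_mult)

lemma line_deriv:
  fixes \<phi> :: "'a::real_normed_vector \<Rightarrow> real"
  assumes "(\<phi> has_derivative L) (at (x + t *\<^sub>R v))"
  shows "((\<lambda>t. \<phi> (x + t *\<^sub>R v)) has_real_derivative L v) (at t)"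
proof -
  have p: "((\<lambda>t. x + t *\<^sub>R v) has_derivative (\<lambda>h. h *\<^sub>R v)) (at t)"
    by (auto intro!: derivative_eq_intros)
  have c: "((\<lambda>t. \<phi> (x + t *\<^sub>R v)) has_derivative (\<lambda>h. L (h *\<^sub>R v))) (at t)"
    using has_derivative_compose[OF p assms] by simp
  have lin: "linear L" using assms has_derivative_linear by blast
  have "(\<lambda>h. L (h *\<^sub>R v)) = (*) (L v)"
    using linear_scale[OF lin] by (auto simp: fun_eq_iff mult.commute)
  with c show ?thesis by (simp add: has_field_derivative_def)
qed

lemma bl_quad:
  fixes w h :: "real^'n"
  shows "bounded_linear (\<lambda>M::real^'n^'n. w \<bullet> (M *v h))"
  by (rule bounded_linearI') (simp_all add: matrix_vector_mult_add_rdistrib inner_add_right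
        scaleR_matrix_vector_assoc[symmetric])

lemma quad_deriv:
  fixes H :: "real^'n \<Rightarrow> real^'n^'n"
  assumes "(H has_derivative D) (at y)"
  shows "((\<lambda>y. w \<bullet> (H y *v h)) has_derivative (\<lambda>k. w \<bullet> (D k *v h))) (at y)"
  using bounded_linear.has_derivative[OF bl_quad assms] .

lemma inner_deriv:
  fixes g :: "real^'n \<Rightarrow> real^'n"
  assumes "(g has_derivative D) (at y)"
  shows "((\<lambda>y. w \<bullet> g y) has_derivative (\<lambda>k. w \<bullet> D k)) (at y)"
  using assms by (auto intro!: derivative_eq_intros)

lemma schwarz_aux:
  fixes u :: "real^'n \<Rightarrow> real" and G M :: "real^'n \<Rightarrow> real^'n"
  assumes S: "open S" "x \<in> S"
    and du: "\<And>y. y \<in> S \<Longrightarrow> (u has_derivative (\<lambda>h. G y \<bullet> h)) (at y)"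
    and dG: "(G has_derivative M) (at x)"
    and e: "e > 0"
  shows "\<exists>s0>0. \<forall>s. 0 < s \<and> s < s0 \<longrightarrow>
     \<bar>(u (x + s *\<^sub>R a + s *\<^sub>R b) - u (x + s *\<^sub>R b) - u (x + s *\<^sub>R a) + u x) - s^2 * (M a \<bullet> b)\<bar>
       \<le> s^2 * e * (norm b * (norm a + 2 * norm b))"
proof -
  obtain d1 where d1: "d1 > 0" "\<And>y. norm (y - x) < d1 \<Longrightarrow> norm (G y - G x - M (y - x)) \<le> e * norm (y - x)"
    using dG e unfolding has_derivative_at_alt by blast
  have linM: "linear M" using dG has_derivative_linear by blast
  obtain d2 where d2: "d2 > 0" "ball x d2 \<subseteq> S" using S openE by blast
  define s0 where "s0 = min d1 d2 / (norm a + norm b + 1)"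
  have den: "norm a + norm b + 1 > 0" using norm_ge_zero[of a] norm_ge_zero[of b] by linarith
  have s0: "s0 > 0" using d1 d2 den by (simp add: s0_def)
  have "\<forall>s. 0 < s \<and> s < s0 \<longrightarrow>
     \<bar>(u (x + s *\<^sub>R a + s *\<^sub>R b) - u (x + s *\<^sub>R b) - u (x + s *\<^sub>R a) + u x) - s^2 * (M a \<bullet> b)\<bar>
       \<le> s^2 * e * (norm b * (norm a + 2 * norm b))"
  proof (intro allI impI)
    fix s :: real assume s: "0 < s \<and> s < s0"
    have sab: "s * (norm a + norm b) < min d1 d2"
    proof -
      have "s * (norm a + norm b + 1) < s0 * (norm a + norm b + 1)"
        using s den by (intro mult_strict_right_mono) auto
      also have "\<dots> = min d1 d2" unfolding s0_def using den by simp
      finally show ?thesis using s by (simp add: algebra_simps)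
    qed
    define p where "p t = x + s *\<^sub>R a + (t * s) *\<^sub>R b" for t
    define q where "q t = x + (t * s) *\<^sub>R b" for t
    have np: "norm (p t - x) \<le> s * (norm a + norm b)" if "0 \<le> t" "t \<le> 1" for t
    proof -
      have "norm (p t - x) = norm (s *\<^sub>R a + (t * s) *\<^sub>R b)" by (simp add: p_def)
      also have "\<dots> \<le> s * norm a + t * s * norm b" using s that
        using norm_triangle_ineq[of "s *\<^sub>R a" "(t * s) *\<^sub>R b"] by (simp add: abs_mult abs_of_nonneg)
      also have "\<dots> \<le> s * (norm a + norm b)" using s that
        by (simp add: algebra_simps mult_left_le_one_le mult_right_le_one_le)
      finally show ?thesis .
    qed
    have nq: "norm (q t - x) \<le> s * norm b" if "0 \<le> t" "t \<le> 1" for t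
    proof -
      have "norm (q t - x) = t * s * norm b" using s that by (simp add: q_def)
      also have "\<dots> \<le> s * norm b" using s that by (simp add: mult_left_le_one_le mult_right_le_one_le)
      finally show ?thesis .
    qed
    have nq': "s * norm b \<le> s * (norm a + norm b)" using s by simp
    define F where "F t = u (p t) - u (q t)" for t
    have dF: "(F has_real_derivative (G (p t) - G (q t)) \<bullet> (s *\<^sub>R b)) (at t)" if "0 \<le> t" "t \<le> 1" for t
    proof -
      have pS: "p t \<in> S" using np[OF that] sab d2 by (auto simp: dist_norm norm_minus_commute)
      have qS: "q t \<in> S" using nq[OF that] nq' sab d2 by (auto simp: dist_norm norm_minus_commute)
      have p': "p t = (x + s *\<^sub>R a) + t *\<^sub>R (s *\<^sub>R b)" by (simp add: p_def algebra_simps)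
      have q': "q t = x + t *\<^sub>R (s *\<^sub>R b)" by (simp add: q_def algebra_simps)
      have "((\<lambda>t. u ((x + s *\<^sub>R a) + t *\<^sub>R (s *\<^sub>R b))) has_real_derivative G (p t) \<bullet> (s *\<^sub>R b)) (at t)"
        using line_deriv[of u "\<lambda>h. G (p t) \<bullet> h" "x + s *\<^sub>R a" t "s *\<^sub>R b"] du[OF pS] unfolding p' by simp
      moreover have "((\<lambda>t. u (x + t *\<^sub>R (s *\<^sub>R b))) has_real_derivative G (q t) \<bullet> (s *\<^sub>R b)) (at t)"
        using line_deriv[of u "\<lambda>h. G (q t) \<bullet> h" x t "s *\<^sub>R b"] du[OF qS] unfolding q' by simp
      ultimately have dd: "((\<lambda>t. u ((x + s *\<^sub>R a) + t *\<^sub>R (s *\<^sub>R b)) - u (x + t *\<^sub>R (s *\<^sub>R b))) has_real_derivative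
          G (p t) \<bullet> (s *\<^sub>R b) - G (q t) \<bullet> (s *\<^sub>R b)) (at t)"
        by (rule DERIV_diff)
      have eqF: "(\<lambda>t. u ((x + s *\<^sub>R a) + t *\<^sub>R (s *\<^sub>R b)) - u (x + t *\<^sub>R (s *\<^sub>R b))) = F"
        by (simp add: fun_eq_iff F_def p_def q_def)
      show ?thesis using dd unfolding eqF inner_diff_left[symmetric] .
    qed
    obtain z where z: "0 < z" "z < 1" "F 1 - F 0 = (1 - 0) * ((G (p z) - G (q z)) \<bullet> (s *\<^sub>R b))"
      using MVT2[of 0 1 F "\<lambda>t. (G (p t) - G (q t)) \<bullet> (s *\<^sub>R b)"] dF by auto
    have F10: "F 1 - F 0 = u (x + s *\<^sub>R a + s *\<^sub>R b) - u (x + s *\<^sub>R b) - u (x + s *\<^sub>R a) + u x"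
      by (simp add: F_def p_def q_def)
    define E1 where "E1 = G (p z) - G x - M (p z - x)"
    define E2 where "E2 = G (q z) - G x - M (q z - x)"
    have e1: "norm E1 \<le> e * (s * (norm a + norm b))"
    proof -
      have "norm (p z - x) < d1" using np[of z] z sab by simp
      hence "norm E1 \<le> e * norm (p z - x)" unfolding E1_def by (rule d1(2))
      also have "\<dots> \<le> e * (s * (norm a + norm b))" using np[of z] z e by (simp add: mult_left_mono)
      finally show ?thesis .
    qed
    have e2: "norm E2 \<le> e * (s * norm b)"
    proof -
      have "norm (q z - x) < d1" using nq[of z] nq' z sab by simp
      hence "norm E2 \<le> e * norm (q z - x)" unfolding E2_def by (rule d1(2))
      also have "\<dots> \<le> e * (s * norm b)" using nq[of z] z e by (simp add: mult_left_mono)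
      finally show ?thesis .
    qed
    have pq: "p z - x - (q z - x) = s *\<^sub>R a" by (simp add: p_def q_def)
    have "G (p z) - G (q z) = E1 - E2 + (M (p z - x) - M (q z - x))"
      by (simp add: E1_def E2_def)
    also have "M (p z - x) - M (q z - x) = s *\<^sub>R M a"
      using linear_diff[OF linM, of "p z - x" "q z - x"] pq linear_scale[OF linM] by simp
    finally have Gd: "G (p z) - G (q z) = E1 - E2 + s *\<^sub>R M a" .
    have "(G (p z) - G (q z)) \<bullet> (s *\<^sub>R b) - s^2 * (M a \<bullet> b) = s * ((E1 - E2) \<bullet> b)"
      unfolding Gd by (simp add: inner_add_left power2_eq_square algebra_simps)
    hence "\<bar>(G (p z) - G (q z)) \<bullet> (s *\<^sub>R b) - s^2 * (M a \<bullet> b)\<bar> = s * \<bar>(E1 - E2) \<bullet> b\<bar>"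
      using s by (simp add: abs_mult)
    also have "\<dots> \<le> s * (norm (E1 - E2) * norm b)"
      using s Cauchy_Schwarz_ineq2 by (simp add: mult_left_mono)
    also have "\<dots> \<le> s * ((e * (s * (norm a + norm b)) + e * (s * norm b)) * norm b)"
      using e1 e2 s norm_triangle_ineq4[of E1 E2]
      by (intro mult_left_mono mult_right_mono) auto
    also have "\<dots> = s^2 * e * (norm b * (norm a + 2 * norm b))"
      by (simp add: power2_eq_square algebra_simps)
    finally show "\<bar>(u (x + s *\<^sub>R a + s *\<^sub>R b) - u (x + s *\<^sub>R b) - u (x + s *\<^sub>R a) + u x) - s^2 * (M a \<bullet> b)\<bar>
       \<le> s^2 * e * (norm b * (norm a + 2 * norm b))"
      using z(3) F10 by simp
  qed
  thus ?thesis using s0 by blast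
qed

lemma schwarz:
  fixes u :: "real^'n \<Rightarrow> real" and G M :: "real^'n \<Rightarrow> real^'n"
  assumes S: "open S" "x \<in> S"
    and du: "\<And>y. y \<in> S \<Longrightarrow> (u has_derivative (\<lambda>h. G y \<bullet> h)) (at y)"
    and dG: "(G has_derivative M) (at x)"
  shows "M a \<bullet> b = M b \<bullet> a"
proof -
  define C where "C = norm b * (norm a + 2 * norm b) + norm a * (norm b + 2 * norm a)"
  have C: "C \<ge> 0" by (simp add: C_def)
  have "\<bar>M a \<bullet> b - M b \<bullet> a\<bar> \<le> e * C" if e: "e > 0" for e
  proof -
    obtain s1 where s1: "s1 > 0" "\<forall>s. 0 < s \<and> s < s1 \<longrightarrow>
     \<bar>(u (x + s *\<^sub>R a + s *\<^sub>R b) - u (x + s *\<^sub>R b) - u (x + s *\<^sub>R a) + u x) - s^2 * (M a \<bullet> b)\<bar>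
       \<le> s^2 * e * (norm b * (norm a + 2 * norm b))"
      using schwarz_aux[OF S du dG e, of a b] by blast
    obtain s2 where s2: "s2 > 0" "\<forall>s. 0 < s \<and> s < s2 \<longrightarrow>
     \<bar>(u (x + s *\<^sub>R b + s *\<^sub>R a) - u (x + s *\<^sub>R a) - u (x + s *\<^sub>R b) + u x) - s^2 * (M b \<bullet> a)\<bar>
       \<le> s^2 * e * (norm a * (norm b + 2 * norm a))"
      using schwarz_aux[OF S du dG e, of b a] by blast
    define s where "s = min s1 s2 / 2"
    have s: "0 < s" "s < s1" "s < s2" using s1 s2 by (auto simp: s_def)
    have eq: "x + s *\<^sub>R b + s *\<^sub>R a = x + s *\<^sub>R a + s *\<^sub>R b" by (simp add: algebra_simps)
    define \<Delta> where "\<Delta> = u (x + s *\<^sub>R a + s *\<^sub>R b) - u (x + s *\<^sub>R b) - u (x + s *\<^sub>R a) + u x"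
    have a1: "\<bar>\<Delta> - s^2 * (M a \<bullet> b)\<bar> \<le> s^2 * e * (norm b * (norm a + 2 * norm b))"
      unfolding \<Delta>_def by (rule s1(2)[rule_format, OF conjI[OF s(1) s(2)]])
    have D2: "\<Delta> = u (x + s *\<^sub>R b + s *\<^sub>R a) - u (x + s *\<^sub>R a) - u (x + s *\<^sub>R b) + u x"
      unfolding \<Delta>_def eq by simp
    have a2: "\<bar>\<Delta> - s^2 * (M b \<bullet> a)\<bar> \<le> s^2 * e * (norm a * (norm b + 2 * norm a))"
      unfolding D2 by (rule s2(2)[rule_format, OF conjI[OF s(1) s(3)]])
    have "(\<Delta> - s^2 * (M b \<bullet> a)) - (\<Delta> - s^2 * (M a \<bullet> b)) = s^2 * (M a \<bullet> b - M b \<bullet> a)"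
      by (simp add: algebra_simps)
    hence "s^2 * \<bar>M a \<bullet> b - M b \<bullet> a\<bar> = \<bar>(\<Delta> - s^2 * (M b \<bullet> a)) - (\<Delta> - s^2 * (M a \<bullet> b))\<bar>"
      by (simp add: abs_mult)
    also have "\<dots> \<le> s^2 * (e * C)" using a1 a2 unfolding C_def by (simp add: algebra_simps abs_le_iff)
    finally show ?thesis using s by simp
  qed
  note ep = this
  show ?thesis
  proof (rule ccontr)
    assume ne: "M a \<bullet> b \<noteq> M b \<bullet> a"
    define X where "X = \<bar>M a \<bullet> b - M b \<bullet> a\<bar>"
    have pos: "X > 0" using ne by (simp add: X_def)
    have "X \<le> (X / (C + 1)) * C" using ep[of "X / (C + 1)"] pos C by (simp add: X_def)
    also have "\<dots> < X" using pos C by (simp add: field_simps)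
    finally show False by simp
  qed
qed

lemma bl_mv:
  fixes c :: "real^'n"
  shows "bounded_linear (\<lambda>M::real^'n^'n. M *v c)"
  by (rule bounded_linearI') (simp_all add: matrix_vector_mult_add_rdistrib
        scaleR_matrix_vector_assoc[symmetric])

locale scb =
  fixes U :: "(real^'n) set" and f :: "real^'n \<Rightarrow> real" and g :: "real^'n \<Rightarrow> real^'n"
    and H :: "real^'n \<Rightarrow> real^'n^'n" and D3 :: "real^'n \<Rightarrow> real^'n \<Rightarrow> real^'n^'n"
  assumes U_open: "open U"
    and f_conv: "convex_on U f"
    and df: "\<And>y. y \<in> U \<Longrightarrow> (f has_derivative (\<lambda>h. g y \<bullet> h)) (at y)"
    and dg: "\<And>y. y \<in> U \<Longrightarrow> (g has_derivative (\<lambda>h. H y *v h)) (at y)"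
    and dH: "\<And>y. y \<in> U \<Longrightarrow> (H has_derivative D3 y) (at y)"
    and sc: "\<And>y h. y \<in> U \<Longrightarrow> \<bar>h \<bullet> (D3 y h *v h)\<bar> \<le> 2 * (h \<bullet> (H y *v h)) powr (3/2)"
    and Hinv: "\<And>y. y \<in> U \<Longrightarrow> invertible (H y)"
begin

lemma H_symm: assumes "y \<in> U" shows "symm (H y)"
proof -
  have "(H y *v a) \<bullet> b = (H y *v b) \<bullet> a" for a b
    using schwarz[OF U_open assms df dg[OF assms]] by blast
  thus ?thesis unfolding symm_def by (simp add: inner_commute)
qed

lemma D3_lin: assumes "y \<in> U" shows "linear (D3 y)"
  using dH[OF assms] has_derivative_linear by blast

lemma D3_symm: assumes "y \<in> U" shows "symm (D3 y a)"
  unfolding symm_def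
proof (intro allI)
  fix b c
  define \<phi> where "\<phi> z = b \<bullet> (H z *v c) - c \<bullet> (H z *v b)" for z
  have d1: "(\<phi> has_derivative (\<lambda>k. b \<bullet> (D3 y k *v c) - c \<bullet> (D3 y k *v b))) (at y)"
    unfolding \<phi>_def by (intro has_derivative_diff quad_deriv dH assms)
  have "\<forall>z\<in>U. \<phi> z = 0" using H_symm unfolding \<phi>_def symm_def by auto
  hence d2: "((\<lambda>z. 0::real) has_derivative (\<lambda>k. b \<bullet> (D3 y k *v c) - c \<bullet> (D3 y k *v b))) (at y)"
    using has_derivative_transform_within_open[OF d1 U_open assms, of "\<lambda>z. 0"] by auto
  have d3: "((\<lambda>z. 0::real) has_derivative (\<lambda>k. 0)) (at y)" by simp
  have "(\<lambda>k. b \<bullet> (D3 y k *v c) - c \<bullet> (D3 y k *v b)) = (\<lambda>k. 0)"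
    using has_derivative_unique[OF d2 d3] .
  hence "b \<bullet> (D3 y a *v c) - c \<bullet> (D3 y a *v b) = 0" by (metis (no_types))
  thus "b \<bullet> (D3 y a *v c) = c \<bullet> (D3 y a *v b)" by simp
qed

lemma D3_swap: assumes "y \<in> U" shows "(D3 y a *v c) \<bullet> b = (D3 y b *v c) \<bullet> a"
proof -
  have du: "((\<lambda>z. c \<bullet> g z) has_derivative (\<lambda>h. (H z *v c) \<bullet> h)) (at z)" if "z \<in> U" for z
  proof -
    have "((\<lambda>z. c \<bullet> g z) has_derivative (\<lambda>h. c \<bullet> (H z *v h))) (at z)"
      by (rule inner_deriv[OF dg[OF that]])
    moreover have "(\<lambda>h. c \<bullet> (H z *v h)) = (\<lambda>h. (H z *v c) \<bullet> h)"
      using H_symm[OF that] unfolding symm_def by (auto simp: fun_eq_iff inner_commute)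
    ultimately show ?thesis by simp
  qed
  have dG: "((\<lambda>z. H z *v c) has_derivative (\<lambda>k. D3 y k *v c)) (at y)"
    using bounded_linear.has_derivative[OF bl_mv dH[OF assms]] .
  show ?thesis using schwarz[OF U_open assms du dG] .
qed

lemma psd_H: assumes "y \<in> U" shows "0 \<le> qf (H y) h"
proof (cases "h = 0")
  case True thus ?thesis by (simp add: qf_def)
next
  case False
  obtain r where r: "r > 0" "ball y r \<subseteq> U" using U_open assms openE by blast
  define \<epsilon> where "\<epsilon> = r / norm h"
  have \<epsilon>: "\<epsilon> > 0" using r False by (simp add: \<epsilon>_def)
  define A where "A = {-\<epsilon><..<\<epsilon>}"
  have inU: "y + t *\<^sub>R h \<in> U" if "t \<in> A" for t
  proof -
    have "norm (t *\<^sub>R h) = \<bar>t\<bar> * norm h" by simp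
    also have "\<dots> < \<epsilon> * norm h" using that False by (auto simp: A_def)
    also have "\<dots> = r" using False by (simp add: \<epsilon>_def)
    finally show ?thesis using r by (auto simp: dist_norm)
  qed
  define q where "q t = f (y + t *\<^sub>R h)" for t
  have cA: "convex A" by (simp add: A_def)
  have qc: "convex_on A q"
  proof (rule convex_onI[OF _ cA])
    fix t s1 s2 :: real assume t: "0 < t" "t < 1" and s: "s1 \<in> A" "s2 \<in> A"
    have "y + ((1 - t) *\<^sub>R s1 + t *\<^sub>R s2) *\<^sub>R h = (1 - t) *\<^sub>R (y + s1 *\<^sub>R h) + t *\<^sub>R (y + s2 *\<^sub>R h)"
      by (simp add: algebra_simps)
    thus "q ((1 - t) *\<^sub>R s1 + t *\<^sub>R s2) \<le> (1 - t) * q s1 + t * q s2"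
      unfolding q_def using convex_onD[OF f_conv, of t "y + s1 *\<^sub>R h" "y + s2 *\<^sub>R h"] t inU s by simp
  qed
  have dq: "(q has_real_derivative (g (y + t *\<^sub>R h) \<bullet> h)) (at t)" if "t \<in> A" for t
    unfolding q_def using line_deriv[of f "\<lambda>k. g (y + t *\<^sub>R h) \<bullet> k" y t h] df[OF inU[OF that]] by simp
  define p where "p t = h \<bullet> g (y + t *\<^sub>R h)" for t
  have dp: "(p has_real_derivative (h \<bullet> (H y *v h))) (at 0)"
    unfolding p_def using line_deriv[of "\<lambda>z. h \<bullet> g z" "\<lambda>k. h \<bullet> (H y *v k)" y 0 h]
      inner_deriv[OF dg[OF assms], of h] by simp
  have intA: "interior A = A" by (simp add: A_def)
  have conA: "connected A" by (simp add: A_def)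
  have A0: "0 \<in> A" using \<epsilon> by (simp add: A_def)
  have mono: "p 0 \<le> p t" if t: "0 < t" "t < \<epsilon>" for t
  proof -
    have tA: "t \<in> A" using t by (simp add: A_def)
    have "(g (y + 0 *\<^sub>R h) \<bullet> h) * (t - 0) \<le> q t - q 0"
      using convex_on_imp_above_tangent[OF qc conA, of 0 t] A0 tA intA
        has_field_derivative_at_within[OF dq[OF A0]] by simp
    moreover have "(g (y + t *\<^sub>R h) \<bullet> h) * (0 - t) \<le> q 0 - q t"
      using convex_on_imp_above_tangent[OF qc conA, of t 0] A0 tA intA
        has_field_derivative_at_within[OF dq[OF tA]] by simp
    ultimately have "(g y \<bullet> h) * t \<le> (g (y + t *\<^sub>R h) \<bullet> h) * t" by simp
    hence "g y \<bullet> h \<le> g (y + t *\<^sub>R h) \<bullet> h" using t by simp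
    thus ?thesis by (simp add: p_def inner_commute)
  qed
  show ?thesis
  proof (rule ccontr)
    assume "\<not> 0 \<le> qf (H y) h"
    hence neg: "h \<bullet> (H y *v h) < 0" by (simp add: qf_def)
    obtain d where d: "d > 0" "\<forall>k>0. k < d \<longrightarrow> p 0 > p (0 + k)"
      using DERIV_neg_dec_right[OF dp neg] by blast
    define t where "t = min d \<epsilon> / 2"
    have t: "0 < t" "t < d" "t < \<epsilon>" using d \<epsilon> by (auto simp: t_def)
    show False using d(2) t mono[of t] by force
  qed
qed

lemma pd_H: assumes "y \<in> U" "h \<noteq> 0" shows "0 < qf (H y) h"
proof (rule ccontr)
  assume "\<not> 0 < qf (H y) h"
  hence z: "qf (H y) h = 0" using psd_H[OF assms(1), of h] by linarith
  have ps: "psd (H y)" using psd_H[OF assms(1)] by (simp add: psd_def)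
  have "((H y *v h) \<bullet> (H y *v h))^2 \<le> qf (H y) (H y *v h) * qf (H y) h"
    using qf_cs[OF H_symm[OF assms(1)] ps, of "H y *v h" h] by simp
  hence "(H y *v h) \<bullet> (H y *v h) = 0" using z by simp
  hence "H y *v h = 0" by simp
  hence "H y *v h = H y *v 0" by simp
  hence "h = 0" using inj_matrix_vector_mult[OF Hinv[OF assms(1)]] by (meson injD)
  thus False using assms(2) by simp
qed

lemma powr32: "0 \<le> (x::real) \<Longrightarrow> x powr (3/2) = x * sqrt x"
proof (cases "x = 0")
  case True thus ?thesis by simp
next
  case False
  assume x: "0 \<le> x"
  have "x powr (3/2) = x powr (1 + 1/2)" by simp
  also have "\<dots> = x powr 1 * x powr (1/2)" by (rule powr_add)
  also have "\<dots> = x * sqrt x" using False x by (simp add: powr_half_sqrt)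
  finally show ?thesis .
qed

lemma P_bound: assumes "y \<in> U" shows "\<bar>v \<bullet> (D3 y v *v v)\<bar> \<le> 2 * qf (H y) v * sqrt (qf (H y) v)"
  using sc[OF assms, of v] powr32[OF psd_H[OF assms, of v]] by (simp add: qf_def)

lemma P_expand:
  assumes "y \<in> U"
  shows "(h + l *\<^sub>R d) \<bullet> (D3 y (h + l *\<^sub>R d) *v (h + l *\<^sub>R d)) =
    h \<bullet> (D3 y h *v h) + 3 * l * (h \<bullet> (D3 y d *v h)) + 3 * l^2 * (h \<bullet> (D3 y d *v d))
    + l^3 * (d \<bullet> (D3 y d *v d))"
proof -
  have lin: "linear (D3 y)" using dH[OF assms] has_derivative_linear by blast
  have Dl: "D3 y (h + l *\<^sub>R d) = D3 y h + l *\<^sub>R D3 y d"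
    using linear_add[OF lin] linear_scale[OF lin] by simp
  have sh: "symm (D3 y h)" and sd: "symm (D3 y d)" using D3_symm[OF assms] by auto
  have e1: "h \<bullet> (D3 y h *v d) = h \<bullet> (D3 y d *v h)"
  proof -
    have "h \<bullet> (D3 y h *v d) = d \<bullet> (D3 y h *v h)" using sh unfolding symm_def by blast
    also have "\<dots> = (D3 y h *v h) \<bullet> d" by (simp add: inner_commute)
    also have "\<dots> = (D3 y d *v h) \<bullet> h" by (rule D3_swap[OF assms])
    finally show ?thesis by (simp add: inner_commute)
  qed
  have e2: "d \<bullet> (D3 y h *v h) = h \<bullet> (D3 y d *v h)"
    using e1 sh unfolding symm_def by metis
  have e3: "d \<bullet> (D3 y h *v d) = h \<bullet> (D3 y d *v d)"
  proof -
    have "d \<bullet> (D3 y h *v d) = (D3 y h *v d) \<bullet> d" by (simp add: inner_commute)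
    also have "\<dots> = (D3 y d *v d) \<bullet> h" by (rule D3_swap[OF assms])
    finally show ?thesis by (simp add: inner_commute)
  qed
  have e4: "d \<bullet> (D3 y d *v h) = h \<bullet> (D3 y d *v d)"
    using sd unfolding symm_def by metis
  show ?thesis
    unfolding Dl
    by (simp add: matrix_vector_mult_add_rdistrib matrix_vector_right_distrib
        scaleR_matrix_vector_assoc[symmetric] matrix_vector_mult_scaleR inner_add_left inner_add_right
        e1 e2 e3 e4 algebra_simps power2_eq_square power3_eq_cube)
qed

lemma mixed:
  assumes "y \<in> U"
  shows "\<bar>h \<bullet> (D3 y d *v h)\<bar> \<le> 3 * sqrt (qf (H y) d) * qf (H y) h"
proof (cases "h = 0 \<or> d = 0")
  case True
  have lin: "linear (D3 y)" using dH[OF assms] has_derivative_linear by blast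
  have "D3 y 0 = 0" using linear_0[OF lin] .
  with True show ?thesis using psd_H[OF assms] by (auto simp: qf_def)
next
  case False
  define Q where "Q v = qf (H y) v" for v
  have Q0: "0 \<le> Q v" for v using psd_H[OF assms] by (simp add: Q_def)
  have sy: "symm (H y)" and ps: "psd (H y)" using H_symm[OF assms] psd_H[OF assms] by (auto simp: psd_def)
  define nh where "nh = sqrt (Q h)"
  define nd where "nd = sqrt (Q d)"
  have nh: "nh > 0" using pd_H[OF assms] False by (simp add: nh_def Q_def)
  have nd: "nd > 0" using pd_H[OF assms] False by (simp add: nd_def Q_def)
  have Qh: "Q h = nh^2" using Q0 by (simp add: nh_def)
  have Qd: "Q d = nd^2" using Q0 by (simp add: nd_def)
  define l where "l = nh / (2 * nd)"
  have l: "l > 0" using nh nd by (simp add: l_def)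
  define P where "P v = v \<bullet> (D3 y v *v v)" for v
  define A where "A = h \<bullet> (D3 y d *v h)"
  define B where "B = h \<bullet> (D3 y d *v d)"
  have Pp: "P (h + l *\<^sub>R d) = P h + 3 * l * A + 3 * l^2 * B + l^3 * P d"
    unfolding P_def A_def B_def by (rule P_expand[OF assms])
  have Pm: "P (h + (-l) *\<^sub>R d) = P h + 3 * (-l) * A + 3 * (-l)^2 * B + (-l)^3 * P d"
    unfolding P_def A_def B_def by (rule P_expand[OF assms])
  have hm: "h + (-l) *\<^sub>R d = h - l *\<^sub>R d" by simp
  have key: "6 * l * A = P (h + l *\<^sub>R d) - P (h - l *\<^sub>R d) - 2 * l^3 * P d"
    using Pp Pm unfolding hm by (simp add: algebra_simps power2_eq_square power3_eq_cube)
  have lnd: "l * nd = nh / 2" using nd by (simp add: l_def)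
  have n1: "sqrt (Q (h + l *\<^sub>R d)) \<le> 3/2 * nh"
  proof -
    have "sqrt (Q (h + l *\<^sub>R d)) \<le> nh + l * nd"
      using qf_tri[OF sy ps, of h "l *\<^sub>R d"] qf_sqrt_scale[of "H y" l d] l
      by (simp add: Q_def nh_def nd_def)
    thus ?thesis using lnd by simp
  qed
  have n2: "sqrt (Q (h - l *\<^sub>R d)) \<le> 3/2 * nh"
  proof -
    have "sqrt (Q (h + (-l) *\<^sub>R d)) \<le> nh + l * nd"
      using qf_tri[OF sy ps, of h "(-l) *\<^sub>R d"] qf_sqrt_scale[of "H y" "-l" d] l
      by (simp add: Q_def nh_def nd_def)
    thus ?thesis using lnd hm by simp
  qed
  have sumQ: "Q (h + l *\<^sub>R d) + Q (h - l *\<^sub>R d) = 5/2 * nh^2"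
  proof -
    have "Q (h + l *\<^sub>R d) + Q (h - l *\<^sub>R d) = 2 * Q h + 2 * (l^2 * Q d)"
      using qf_add[OF sy, of h "l *\<^sub>R d"] qf_diff[OF sy, of h "l *\<^sub>R d"] qf_scale[of "H y" l d]
      by (simp add: Q_def)
    also have "l^2 * Q d = nh^2 / 4" using nd unfolding Qd l_def by (simp add: power_divide power_mult_distrib)
    finally show ?thesis unfolding Qh by simp
  qed
  have b1: "\<bar>P (h + l *\<^sub>R d)\<bar> \<le> 3 * nh * Q (h + l *\<^sub>R d)"
  proof -
    have "\<bar>P (h + l *\<^sub>R d)\<bar> \<le> 2 * Q (h + l *\<^sub>R d) * sqrt (Q (h + l *\<^sub>R d))"
      using P_bound[OF assms] by (simp add: P_def Q_def)
    also have "\<dots> \<le> 2 * Q (h + l *\<^sub>R d) * (3/2 * nh)"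
      using n1 Q0 by (intro mult_left_mono) auto
    finally show ?thesis by simp
  qed
  have b2: "\<bar>P (h - l *\<^sub>R d)\<bar> \<le> 3 * nh * Q (h - l *\<^sub>R d)"
  proof -
    have "\<bar>P (h - l *\<^sub>R d)\<bar> \<le> 2 * Q (h - l *\<^sub>R d) * sqrt (Q (h - l *\<^sub>R d))"
      using P_bound[OF assms] by (simp add: P_def Q_def)
    also have "\<dots> \<le> 2 * Q (h - l *\<^sub>R d) * (3/2 * nh)"
      using n2 Q0 by (intro mult_left_mono) auto
    finally show ?thesis by simp
  qed
  have b3: "\<bar>P d\<bar> \<le> 2 * nd^3"
    using P_bound[OF assms, of d] Qd nd by (simp add: P_def Q_def nd_def power3_eq_cube)
  have "6 * l * \<bar>A\<bar> = \<bar>6 * l * A\<bar>" using l by (simp add: abs_mult)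
  also have "\<dots> = \<bar>P (h + l *\<^sub>R d) - P (h - l *\<^sub>R d) - 2 * l^3 * P d\<bar>" using key by simp
  also have "\<dots> \<le> \<bar>P (h + l *\<^sub>R d)\<bar> + \<bar>P (h - l *\<^sub>R d)\<bar> + \<bar>2 * l^3 * P d\<bar>"
    using abs_triangle_ineq4[of "P (h + l *\<^sub>R d) - P (h - l *\<^sub>R d)" "2 * l^3 * P d"]
      abs_triangle_ineq4[of "P (h + l *\<^sub>R d)" "P (h - l *\<^sub>R d)"] by linarith
  also have "\<dots> = \<bar>P (h + l *\<^sub>R d)\<bar> + \<bar>P (h - l *\<^sub>R d)\<bar> + 2 * l^3 * \<bar>P d\<bar>" using l by (simp add: abs_mult)
  also have "\<dots> \<le> 3 * nh * Q (h + l *\<^sub>R d) + 3 * nh * Q (h - l *\<^sub>R d) + 2 * l^3 * (2 * nd^3)"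
  proof -
    have "2 * l^3 * \<bar>P d\<bar> \<le> 2 * l^3 * (2 * nd^3)" using b3 l by (intro mult_left_mono) auto
    thus ?thesis using b1 b2 by linarith
  qed
  also have "\<dots> = 3 * nh * (Q (h + l *\<^sub>R d) + Q (h - l *\<^sub>R d)) + 4 * (l * nd)^3"
    by (simp add: algebra_simps power_mult_distrib)
  also have "\<dots> = 8 * nh^3"
    unfolding sumQ lnd by (simp add: power2_eq_square power3_eq_cube algebra_simps)
  finally have "6 * l * \<bar>A\<bar> \<le> 8 * nh^3" .
  hence "6 * l * \<bar>A\<bar> * nd \<le> 8 * nh^3 * nd" using nd by (intro mult_right_mono) auto
  hence "6 * (l * nd) * \<bar>A\<bar> \<le> 8 * nh^3 * nd" by (simp add: algebra_simps)
  hence "3 * nh * \<bar>A\<bar> \<le> 8 * nh^3 * nd" unfolding lnd by simp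
  hence "\<bar>A\<bar> \<le> 8/3 * nh^2 * nd" using nh by (simp add: power2_eq_square power3_eq_cube field_simps)
  also have "\<dots> \<le> 3 * nd * nh^2" using nh nd by simp
  finally show ?thesis unfolding A_def using Qh by (simp add: Q_def nd_def mult.commute mult.left_commute)
qed

end

context scb begin

lemma path_deriv_qf:
  assumes "x + s *\<^sub>R d \<in> U"
  shows "((\<lambda>s. qf (H (x + s *\<^sub>R d)) h) has_real_derivative (h \<bullet> (D3 (x + s *\<^sub>R d) d *v h))) (at s)"
  using line_deriv[of "\<lambda>z. h \<bullet> (H z *v h)" "\<lambda>k. h \<bullet> (D3 (x + s *\<^sub>R d) k *v h)" x s d]
    quad_deriv[OF dH[OF assms], of h h] by (simp add: qf_def)

lemma phi_bound:
  assumes x: "x \<in> U" and r1: "sqrt (qf (H x) d) * t < 1" and t: "0 \<le> t"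
    and path: "\<And>s. 0 \<le> s \<Longrightarrow> s \<le> t \<Longrightarrow> x + s *\<^sub>R d \<in> U"
  shows "sqrt (qf (H (x + t *\<^sub>R d)) d) \<le> sqrt (qf (H x) d) / (1 - t * sqrt (qf (H x) d))"
proof (cases "d = 0")
  case True thus ?thesis by (simp add: qf_def)
next
  case False
  define r where "r = sqrt (qf (H x) d)"
  define \<phi> where "\<phi> s = qf (H (x + s *\<^sub>R d)) d" for s
  define \<phi>' where "\<phi>' s = d \<bullet> (D3 (x + s *\<^sub>R d) d *v d)" for s
  have \<phi>pos: "\<phi> s > 0" if "0 \<le> s" "s \<le> t" for s
    using pd_H[OF path[OF that] False] by (simp add: \<phi>_def)
  have r: "r > 0" using pd_H[OF x False] by (simp add: r_def)
  have \<phi>0: "\<phi> 0 = r^2" using psd_H[OF x, of d] by (simp add: \<phi>_def r_def)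
  define \<kappa> where "\<kappa> s = inverse (sqrt (\<phi> s)) + s" for s
  have d\<kappa>: "\<exists>D. (\<kappa> has_real_derivative D) (at s) \<and> 0 \<le> D" if s: "0 \<le> s" "s \<le> t" for s
  proof -
    have dphi: "(\<phi> has_real_derivative \<phi>' s) (at s)"
      unfolding \<phi>_def \<phi>'_def by (rule path_deriv_qf[OF path[OF s]])
    have ps: "\<phi> s > 0" using \<phi>pos[OF s] .
    have dsq: "((\<lambda>s. sqrt (\<phi> s)) has_real_derivative (inverse (sqrt (\<phi> s)) / 2 * \<phi>' s)) (at s)"
      using DERIV_chain2[OF DERIV_real_sqrt[OF ps] dphi] .
    have dinv: "((\<lambda>s. inverse (sqrt (\<phi> s))) has_real_derivative
        - (inverse (sqrt (\<phi> s)) * (inverse (sqrt (\<phi> s)) / 2 * \<phi>' s) * inverse (sqrt (\<phi> s)))) (at s)"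
      using DERIV_inverse'[OF dsq] ps by simp
    have dx: "(\<kappa> has_real_derivative
        (- (inverse (sqrt (\<phi> s)) * (inverse (sqrt (\<phi> s)) / 2 * \<phi>' s) * inverse (sqrt (\<phi> s))) + 1)) (at s)"
      unfolding \<kappa>_def by (intro DERIV_add dinv DERIV_ident)
    have bnd: "\<phi>' s \<le> 2 * \<phi> s * sqrt (\<phi> s)"
      using P_bound[OF path[OF s], of d] by (simp add: \<phi>_def \<phi>'_def)
    have "inverse (sqrt (\<phi> s)) * (inverse (sqrt (\<phi> s)) / 2 * \<phi>' s) * inverse (sqrt (\<phi> s))
        = \<phi>' s / (2 * \<phi> s * sqrt (\<phi> s))"
      using ps by (simp add: field_simps)
    also have "\<dots> \<le> 1" using bnd ps by (simp add: divide_le_eq_1)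
    finally show ?thesis using dx by (intro exI[of _ "(- (inverse (sqrt (\<phi> s)) * (inverse (sqrt (\<phi> s)) / 2 * \<phi>' s) * inverse (sqrt (\<phi> s))) + 1)"]) auto
  qed
  have "\<kappa> 0 \<le> \<kappa> t"
    by (rule DERIV_nonneg_imp_nondecreasing[OF t]) (use d\<kappa> in auto)
  hence "1 / r - t \<le> inverse (sqrt (\<phi> t))"
    using \<phi>0 r by (simp add: \<kappa>_def inverse_eq_divide)
  hence c1: "1 / r - t \<le> 1 / sqrt (\<phi> t)" by (simp add: inverse_eq_divide)
  have tr: "r * t < 1" using r1 by (simp add: r_def)
  have ceq: "1 / r - t = (1 - r * t) / r" using r by (simp add: field_simps)
  have cpos: "1 / r - t > 0" unfolding ceq using tr r by simp
  have sp: "sqrt (\<phi> t) > 0" using \<phi>pos[of t] t by simp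
  have "(1 / r - t) * sqrt (\<phi> t) \<le> (1 / sqrt (\<phi> t)) * sqrt (\<phi> t)"
    using c1 sp by (intro mult_right_mono) auto
  also have "\<dots> = 1" using sp by simp
  finally have "(1 / r - t) * sqrt (\<phi> t) \<le> 1" .
  hence "sqrt (\<phi> t) \<le> 1 / (1 / r - t)" using cpos by (simp add: le_divide_eq mult.commute)
  also have "\<dots> = r / (1 - t * r)" using r by (simp add: field_simps)
  finally show ?thesis by (simp add: \<phi>_def r_def)
qed

lemma path_deriv_f:
  assumes "x + s *\<^sub>R d \<in> U"
  shows "((\<lambda>s. f (x + s *\<^sub>R d)) has_real_derivative (d \<bullet> g (x + s *\<^sub>R d))) (at s)"
  using line_deriv[of f "\<lambda>k. g (x + s *\<^sub>R d) \<bullet> k" x s d] df[OF assms] by (simp add: inner_commute)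

lemma path_deriv_g:
  assumes "x + s *\<^sub>R d \<in> U"
  shows "((\<lambda>s. w \<bullet> g (x + s *\<^sub>R d)) has_real_derivative (w \<bullet> (H (x + s *\<^sub>R d) *v d))) (at s)"
  using line_deriv[of "\<lambda>z. w \<bullet> g z" "\<lambda>k. w \<bullet> (H (x + s *\<^sub>R d) *v k)" x s d]
    inner_deriv[OF dg[OF assms], of w] by simp

lemma dikin:
  assumes x: "x \<in> U" and r1: "sqrt (qf (H x) d) < 1"
    and K: "closed K" "U = interior K" "\<forall>p\<in>frontier K. filterlim f at_top (at p within U)"
  shows "\<forall>t. 0 \<le> t \<and> t \<le> 1 \<longrightarrow> x + t *\<^sub>R d \<in> U"
proof (rule ccontr)
  assume neg: "\<not> (\<forall>t. 0 \<le> t \<and> t \<le> 1 \<longrightarrow> x + t *\<^sub>R d \<in> U)"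
  define S where "S = {t \<in> {0..1}. x + t *\<^sub>R d \<notin> U}"
  have Sne: "S \<noteq> {}" using neg by (auto simp: S_def)
  have S_eq: "S = {0..1} \<inter> (\<lambda>t. x + t *\<^sub>R d) -` (- U)" by (auto simp: S_def)
  have clS: "closed S" unfolding S_eq
    by (intro closed_Int closed_atLeastAtMost continuous_closed_vimage closed_Compl U_open)
       (auto intro!: continuous_intros)
  have bS: "bdd_below S" by (rule bdd_belowI[of _ 0]) (auto simp: S_def)
  define t0 where "t0 = Inf S"
  have t0S: "t0 \<in> S" unfolding t0_def by (rule closed_contains_Inf[OF Sne bS clS])
  have low: "t0 \<le> s" if "s \<in> S" for s unfolding t0_def by (rule cInf_lower[OF that bS])
  have t01: "0 \<le> t0" "t0 \<le> 1" "x + t0 *\<^sub>R d \<notin> U" using t0S by (auto simp: S_def)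
  have t0pos: "t0 > 0" using t01 x by (cases "t0 = 0") auto
  have path: "x + s *\<^sub>R d \<in> U" if "0 \<le> s" "s < t0" for s
    using low[of s] that t01 by (force simp: S_def)
  have d0: "d \<noteq> 0" using t01 x by auto
  define r where "r = sqrt (qf (H x) d)"
  have r0: "0 \<le> r" using psd_H[OF x, of d] by (simp add: r_def)
  have r1': "r < 1" using r1 by (simp add: r_def)
  define B where "B = (r / (1 - r))^2"
  have qfB: "qf (H (x + s *\<^sub>R d)) d \<le> B" if s: "0 \<le> s" "s < t0" for s
  proof -
    have rs: "r * s \<le> r" using s t01 r0 by (intro mult_right_le_one_le) auto
    have rs1: "sqrt (qf (H x) d) * s < 1" using rs r1' unfolding r_def by linarith
    have "sqrt (qf (H (x + s *\<^sub>R d)) d) \<le> r / (1 - s * r)"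
      unfolding r_def by (rule phi_bound[OF x rs1 s(1)]) (use path s in auto)
    also have "\<dots> \<le> r / (1 - r)" using rs r1' r0 by (intro divide_left_mono) (auto simp: mult.commute)
    finally have sq: "sqrt (qf (H (x + s *\<^sub>R d)) d) \<le> r / (1 - r)" .
    have "qf (H (x + s *\<^sub>R d)) d = (sqrt (qf (H (x + s *\<^sub>R d)) d))^2"
      using psd_H[OF path[OF s]] by simp
    also have "\<dots> \<le> B" unfolding B_def by (rule power_mono[OF sq]) (use psd_H[OF path[OF s]] in simp)
    finally show ?thesis .
  qed
  define w1 where "w1 s = d \<bullet> g (x + s *\<^sub>R d)" for s
  have w1b: "w1 s \<le> \<bar>w1 0\<bar> + B" if s: "0 \<le> s" "s < t0" for s
  proof -
    have "w1 s - B * s \<le> w1 0 - B * 0"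
    proof (rule DERIV_nonpos_imp_nonincreasing[OF s(1)])
      fix u assume u: "0 \<le> u" "u \<le> s"
      have "((\<lambda>u. w1 u - B * u) has_real_derivative (qf (H (x + u *\<^sub>R d)) d - B * 1)) (at u)"
        unfolding w1_def using path_deriv_g[OF path, of u d] u s
        by (intro DERIV_diff DERIV_cmult DERIV_ident) (auto simp: qf_def)
      moreover have "qf (H (x + u *\<^sub>R d)) d - B * 1 \<le> 0" using qfB[of u] u s by simp
      ultimately show "\<exists>y. ((\<lambda>u. w1 u - B * u) has_real_derivative y) (at u) \<and> y \<le> 0" by blast
    qed
    moreover have "B * s \<le> B" using s t01 by (intro mult_right_le_one_le) (auto simp: B_def)
    ultimately show ?thesis by simp
  qed
  define C where "C = f x + \<bar>w1 0\<bar> + B"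
  have fb: "f (x + s *\<^sub>R d) \<le> C" if s: "0 \<le> s" "s < t0" for s
  proof -
    have "f (x + s *\<^sub>R d) - (\<bar>w1 0\<bar> + B) * s \<le> f (x + 0 *\<^sub>R d) - (\<bar>w1 0\<bar> + B) * 0"
    proof (rule DERIV_nonpos_imp_nonincreasing[OF s(1), of "\<lambda>s. f (x + s *\<^sub>R d) - (\<bar>w1 0\<bar> + B) * s"])
      fix u assume u: "0 \<le> u" "u \<le> s"
      have "((\<lambda>u. f (x + u *\<^sub>R d) - (\<bar>w1 0\<bar> + B) * u) has_real_derivative (w1 u - (\<bar>w1 0\<bar> + B) * 1)) (at u)"
        unfolding w1_def using path_deriv_f[OF path, of u] u s
        by (intro DERIV_diff DERIV_cmult DERIV_ident) auto
      moreover have "w1 u - (\<bar>w1 0\<bar> + B) * 1 \<le> 0" using w1b[of u] u s by simp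
      ultimately show "\<exists>y. ((\<lambda>u. f (x + u *\<^sub>R d) - (\<bar>w1 0\<bar> + B) * u) has_real_derivative y) (at u) \<and> y \<le> 0" by blast
    qed
    moreover have "0 \<le> B" by (simp add: B_def)
    moreover have "(\<bar>w1 0\<bar> + B) * s \<le> \<bar>w1 0\<bar> + B"
      using s t01 \<open>0 \<le> B\<close> by (intro mult_right_le_one_le) auto
    ultimately show ?thesis by (simp add: C_def)
  qed
  define p where "p = x + t0 *\<^sub>R d"
  have ev: "eventually (\<lambda>s. 0 < s \<and> s < t0) (at_left t0)"
    using t0pos by (auto simp: eventually_at_left intro!: exI[of _ 0])
  have lim: "((\<lambda>s. x + s *\<^sub>R d) \<longlongrightarrow> p) (at_left t0)"
    unfolding p_def by (intro tendsto_intros)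
  have pK: "p \<in> K"
  proof (rule Lim_in_closed_set[OF K(1) _ _ lim])
    show "eventually (\<lambda>s. x + s *\<^sub>R d \<in> K) (at_left t0)"
      using ev
    proof eventually_elim
      case (elim s)
      hence "x + s *\<^sub>R d \<in> U" using path by simp
      thus "x + s *\<^sub>R d \<in> K" using K(2) interior_subset by blast
    qed
  qed simp
  have pF: "p \<in> frontier K" using pK t01 K by (simp add: frontier_def closure_closed p_def)
  have fl: "filterlim f at_top (at p within U)" using K(3) pF by blast
  have fl2: "filterlim (\<lambda>s. x + s *\<^sub>R d) (at p within U) (at_left t0)"
    unfolding filterlim_at
  proof
    show "eventually (\<lambda>s. x + s *\<^sub>R d \<in> U \<and> x + s *\<^sub>R d \<noteq> p) (at_left t0)"
      using ev by eventually_elim (use path d0 in \<open>auto simp: p_def\<close>)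
  qed (rule lim)
  have "filterlim (\<lambda>s. f (x + s *\<^sub>R d)) at_top (at_left t0)"
    by (rule filterlim_compose[OF fl fl2])
  hence "eventually (\<lambda>s. C + 1 \<le> f (x + s *\<^sub>R d)) (at_left t0)"
    unfolding filterlim_at_top by blast
  moreover have "eventually (\<lambda>s. f (x + s *\<^sub>R d) \<le> C) (at_left t0)"
    using ev by eventually_elim (use fb in auto)
  ultimately have "eventually (\<lambda>s. False) (at_left t0)"
    by eventually_elim simp
  thus False by simp
qed

end

lemma bil_bound:
  fixes G M :: "real^'n^'n"
  assumes sG: "symm G" and sM: "symm M" and pdM: "\<And>v. v \<noteq> 0 \<Longrightarrow> 0 < qf M v"
    and b: "\<And>v. \<bar>qf G v\<bar> \<le> a * qf M v"
  shows "\<bar>w \<bullet> (G *v d)\<bar> \<le> a * sqrt (qf M w) * sqrt (qf M d)"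
proof (cases "w = 0 \<or> d = 0")
  case True thus ?thesis by (auto simp: qf_def)
next
  case False
  define nw where "nw = sqrt (qf M w)"
  define nd where "nd = sqrt (qf M d)"
  have nw: "nw > 0" and nd: "nd > 0" using pdM False by (auto simp: nw_def nd_def)
  have qw: "qf M w = nw^2" using pdM[of w] False by (simp add: nw_def)
  have qd: "qf M d = nd^2" using pdM[of d] False by (simp add: nd_def)
  define \<mu> where "\<mu> = sqrt (nd / nw)"
  have \<mu>: "\<mu> > 0" using nw nd by (simp add: \<mu>_def)
  have \<mu>2: "\<mu>^2 = nd / nw" using nw nd by (simp add: \<mu>_def)
  define u where "u = \<mu> *\<^sub>R w"
  define v where "v = (1 / \<mu>) *\<^sub>R d"
  have uv: "u \<bullet> (G *v v) = w \<bullet> (G *v d)" using \<mu> by (simp add: u_def v_def matrix_vector_mult_scaleR)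
  have e4: "4 * (u \<bullet> (G *v v)) = qf G (u + v) - qf G (u - v)"
    using qf_add[OF sG, of u v] qf_diff[OF sG, of u v] by simp
  have sumM: "qf M (u + v) + qf M (u - v) = 2 * (\<mu>^2 * nw^2) + 2 * (nd^2 / \<mu>^2)"
    using qf_add[OF sM, of u v] qf_diff[OF sM, of u v] qf_scale[of M \<mu> w] qf_scale[of M "1/\<mu>" d] qw qd
    by (simp add: u_def v_def power_divide)
  also have "\<dots> = 4 * (nw * nd)" unfolding \<mu>2 using nw nd by (simp add: field_simps power2_eq_square)
  finally have sumM': "qf M (u + v) + qf M (u - v) = 4 * (nw * nd)" .
  have "4 * \<bar>w \<bullet> (G *v d)\<bar> = \<bar>qf G (u + v) - qf G (u - v)\<bar>" using e4 uv by simp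
  also have "\<dots> \<le> \<bar>qf G (u + v)\<bar> + \<bar>qf G (u - v)\<bar>" by (rule abs_triangle_ineq4)
  also have "\<dots> \<le> a * qf M (u + v) + a * qf M (u - v)" using b[of "u + v"] b[of "u - v"] by linarith
  also have "\<dots> = a * (qf M (u + v) + qf M (u - v))" by (simp add: distrib_left)
  also have "\<dots> = 4 * (a * nw * nd)" unfolding sumM' by simp
  finally show ?thesis by (simp add: nw_def nd_def)
qed

lemma qf_mdiff: "qf (A - B) v = qf A v - qf B v"
  by (simp add: qf_def matrix_vector_mult_diff_rdistrib inner_diff_right)

lemma symm_diff: "symm A \<Longrightarrow> symm B \<Longrightarrow> symm (A - B)"
  by (simp add: symm_def matrix_vector_mult_diff_rdistrib inner_diff_right)

context scb begin

lemma hess_cmp: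
  assumes x: "x \<in> U" and r1: "sqrt (qf (H x) d) < 1"
    and path: "\<And>s. 0 \<le> s \<Longrightarrow> s \<le> 1 \<Longrightarrow> x + s *\<^sub>R d \<in> U"
    and t: "0 \<le> t" "t \<le> 1"
  shows "(1 - t * sqrt (qf (H x) d))^3 * qf (H x) h \<le> qf (H (x + t *\<^sub>R d)) h"
    and "qf (H (x + t *\<^sub>R d)) h * (1 - t * sqrt (qf (H x) d))^3 \<le> qf (H x) h"
proof -
  define r where "r = sqrt (qf (H x) d)"
  have r0: "0 \<le> r" using psd_H[OF x, of d] by (simp add: r_def)
  have r1': "r < 1" using r1 by (simp add: r_def)
  define c where "c s = 1 - s * r" for s
  have cpos: "c s > 0" if "0 \<le> s" "s \<le> 1" for s
  proof -
    have "s * r \<le> r" using that r0 by (intro mult_left_le_one_le) auto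
    thus ?thesis using r1' by (simp add: c_def)
  qed
  define \<psi> where "\<psi> s = qf (H (x + s *\<^sub>R d)) h" for s
  define \<psi>' where "\<psi>' s = h \<bullet> (D3 (x + s *\<^sub>R d) d *v h)" for s
  have d\<psi>: "(\<psi> has_real_derivative \<psi>' s) (at s)" if "0 \<le> s" "s \<le> 1" for s
    unfolding \<psi>_def \<psi>'_def by (rule path_deriv_qf[OF path[OF that]])
  have \<psi>0: "\<psi> s \<ge> 0" if "0 \<le> s" "s \<le> 1" for s using psd_H[OF path[OF that]] by (simp add: \<psi>_def)
  have dc: "(c has_real_derivative (- r)) (at s)" for s
    unfolding c_def by (auto intro!: derivative_eq_intros)
  have dc3: "((\<lambda>s. (c s)^3) has_real_derivative (3 * (c s)^2 * (- r))) (at s)" for s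
    using DERIV_power[OF dc[of s], of 3] by (simp add: algebra_simps)
  have key: "c s * \<bar>\<psi>' s\<bar> \<le> 3 * r * \<psi> s" if s: "0 \<le> s" "s \<le> 1" for s
  proof -
    have "r * s \<le> r" using s r0 by (intro mult_right_le_one_le) auto
    hence rs: "r * s < 1" using r1' by linarith
    have pb: "sqrt (qf (H (x + s *\<^sub>R d)) d) \<le> r / (1 - s * r)"
      unfolding r_def by (rule phi_bound[OF x _ s(1)]) (use rs path s in \<open>auto simp: r_def\<close>)
    have "\<bar>\<psi>' s\<bar> \<le> 3 * sqrt (qf (H (x + s *\<^sub>R d)) d) * \<psi> s"
      unfolding \<psi>'_def \<psi>_def by (rule mixed[OF path[OF s]])
    also have "\<dots> \<le> 3 * (r / c s) * \<psi> s"
      using pb \<psi>0[OF s] by (intro mult_right_mono mult_left_mono) (auto simp: c_def)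
    finally have "\<bar>\<psi>' s\<bar> \<le> 3 * (r / c s) * \<psi> s" .
    hence "c s * \<bar>\<psi>' s\<bar> \<le> c s * (3 * (r / c s) * \<psi> s)" using cpos[OF s] by (intro mult_left_mono) auto
    also have "\<dots> = 3 * r * \<psi> s" using cpos[OF s] by (simp add: field_simps)
    finally show ?thesis .
  qed
  show "(1 - t * sqrt (qf (H x) d))^3 * qf (H x) h \<le> qf (H (x + t *\<^sub>R d)) h"
  proof -
    define \<Psi> where "\<Psi> s = \<psi> s / (c s)^3" for s
    have "\<Psi> 0 \<le> \<Psi> t"
    proof (rule DERIV_nonneg_imp_nondecreasing[OF t(1)])
      fix s assume s: "0 \<le> s" "s \<le> t"
      hence s1: "0 \<le> s" "s \<le> 1" using t by auto
      have "(\<Psi> has_real_derivative (\<psi>' s * (c s)^3 - \<psi> s * (3 * (c s)^2 * (- r))) / ((c s)^3 * (c s)^3)) (at s)"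
        unfolding \<Psi>_def
        by (rule DERIV_divide[OF d\<psi>[OF s1] dc3]) (use cpos[OF s1] in auto)
      moreover have "0 \<le> (\<psi>' s * (c s)^3 - \<psi> s * (3 * (c s)^2 * (- r))) / ((c s)^3 * (c s)^3)"
      proof -
        have "\<psi>' s * (c s)^3 - \<psi> s * (3 * (c s)^2 * (- r)) = (c s)^2 * (c s * \<psi>' s + 3 * r * \<psi> s)"
          by (simp add: power2_eq_square power3_eq_cube algebra_simps)
        moreover have "c s * \<psi>' s + 3 * r * \<psi> s \<ge> 0"
        proof -
          have "c s * (- \<psi>' s) \<le> c s * \<bar>\<psi>' s\<bar>" using cpos[OF s1] by (intro mult_left_mono) auto
          thus ?thesis using key[OF s1] by simp
        qed
        ultimately show ?thesis using cpos[OF s1] by simp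
      qed
      ultimately show "\<exists>y. (\<Psi> has_real_derivative y) (at s) \<and> 0 \<le> y" by blast
    qed
    hence "\<psi> 0 \<le> \<psi> t / (c t)^3" by (simp add: \<Psi>_def c_def)
    hence "\<psi> 0 * (c t)^3 \<le> \<psi> t" using cpos[OF t] by (simp add: le_divide_eq)
    thus ?thesis by (simp add: \<psi>_def c_def r_def mult.commute)
  qed
  show "qf (H (x + t *\<^sub>R d)) h * (1 - t * sqrt (qf (H x) d))^3 \<le> qf (H x) h"
  proof -
    define \<Phi> where "\<Phi> s = \<psi> s * (c s)^3" for s
    have "\<Phi> t \<le> \<Phi> 0"
    proof (rule DERIV_nonpos_imp_nonincreasing[OF t(1)])
      fix s assume s: "0 \<le> s" "s \<le> t"
      hence s1: "0 \<le> s" "s \<le> 1" using t by auto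
      have "(\<Phi> has_real_derivative (\<psi>' s * (c s)^3 + \<psi> s * (3 * (c s)^2 * (- r)))) (at s)"
        unfolding \<Phi>_def using DERIV_mult[OF d\<psi>[OF s1] dc3[of s]] by (simp add: algebra_simps)
      moreover have "\<psi>' s * (c s)^3 + \<psi> s * (3 * (c s)^2 * (- r)) \<le> 0"
      proof -
        have "\<psi>' s * (c s)^3 + \<psi> s * (3 * (c s)^2 * (- r)) = (c s)^2 * (c s * \<psi>' s - 3 * r * \<psi> s)"
          by (simp add: power2_eq_square power3_eq_cube algebra_simps)
        moreover have "c s * \<psi>' s - 3 * r * \<psi> s \<le> 0"
        proof -
          have "c s * \<psi>' s \<le> c s * \<bar>\<psi>' s\<bar>" using cpos[OF s1] by (intro mult_left_mono) auto
          thus ?thesis using key[OF s1] by simp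
        qed
        ultimately show ?thesis by (simp add: mult_nonneg_nonpos)
      qed
      ultimately show "\<exists>y. (\<Phi> has_real_derivative y) (at s) \<and> y \<le> 0" by blast
    qed
    thus ?thesis by (simp add: \<Phi>_def \<psi>_def c_def r_def)
  qed
qed

end

context scb begin

lemma rem_bound:
  assumes x: "x \<in> U" and r1: "sqrt (qf (H x) d) < 1"
    and path: "\<And>s. 0 \<le> s \<Longrightarrow> s \<le> 1 \<Longrightarrow> x + s *\<^sub>R d \<in> U"
  shows "\<bar>w \<bullet> (g (x + d) - g x - H x *v d)\<bar> \<le>
     sqrt (qf (H x) w) * (1 / (2 * (1 - sqrt (qf (H x) d))^2) - 1/2 - sqrt (qf (H x) d))"
proof -
  define r where "r = sqrt (qf (H x) d)"
  have r0: "0 \<le> r" using psd_H[OF x, of d] by (simp add: r_def)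
  have r1': "r < 1" using r1 by (simp add: r_def)
  define c where "c s = 1 - s * r" for s
  have cpos: "c s > 0" "c s \<le> 1" if "0 \<le> s" "s \<le> 1" for s
  proof -
    have "s * r \<le> r" using that r0 by (intro mult_left_le_one_le) auto
    thus "c s > 0" using r1' by (simp add: c_def)
    show "c s \<le> 1" using that r0 by (simp add: c_def)
  qed
  define nw where "nw = sqrt (qf (H x) w)"
  have nw0: "0 \<le> nw" using psd_H[OF x, of w] by (simp add: nw_def)
  define a where "a s = 1 / (c s)^3 - 1" for s
  define F where "F s = w \<bullet> g (x + s *\<^sub>R d) - s * (w \<bullet> (H x *v d))" for s
  define F' where "F' s = w \<bullet> ((H (x + s *\<^sub>R d) - H x) *v d)" for s
  have dF: "(F has_real_derivative F' s) (at s)" if s: "0 \<le> s" "s \<le> 1" for s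
  proof -
    have "(F has_real_derivative (w \<bullet> (H (x + s *\<^sub>R d) *v d) - 1 * (w \<bullet> (H x *v d)))) (at s)"
      unfolding F_def by (intro DERIV_diff path_deriv_g[OF path[OF s]] DERIV_cmult_right DERIV_ident)
    thus ?thesis by (simp add: F'_def matrix_vector_mult_diff_rdistrib inner_diff_right)
  qed
  have F'b: "\<bar>F' s\<bar> \<le> a s * nw * r" if s: "0 \<le> s" "s \<le> 1" for s
  proof -
    have c3: "0 < (c s)^3" "(c s)^3 \<le> 1" using cpos[OF s] by (auto simp: power_le_one)
    have b: "\<bar>qf (H (x + s *\<^sub>R d) - H x) v\<bar> \<le> a s * qf (H x) v" for v
    proof -
      have up: "qf (H (x + s *\<^sub>R d)) v * (c s)^3 \<le> qf (H x) v"
        using hess_cmp(2)[OF x r1 path s, of v] by (simp add: c_def r_def)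
      have lo: "(c s)^3 * qf (H x) v \<le> qf (H (x + s *\<^sub>R d)) v"
        using hess_cmp(1)[OF x r1 path s, of v] by (simp add: c_def r_def)
      have q0: "0 \<le> qf (H x) v" using psd_H[OF x] .
      have u1: "qf (H (x + s *\<^sub>R d)) v \<le> qf (H x) v / (c s)^3" using up c3 by (simp add: le_divide_eq)
      have "1 - (c s)^3 \<le> 1 / (c s)^3 - 1"
      proof -
        have "(c s)^3 * (1 - (c s)^3) \<le> 1 * (1 - (c s)^3)" using c3 by (intro mult_right_mono) auto
        hence "1 - (c s)^3 \<le> (1 - (c s)^3) / (c s)^3" using c3 by (simp add: le_divide_eq mult.commute)
        also have "\<dots> = 1 / (c s)^3 - 1" using c3 by (simp add: field_simps)
        finally show ?thesis .
      qed
      hence "(1 - (c s)^3) * qf (H x) v \<le> (1 / (c s)^3 - 1) * qf (H x) v" using q0 by (intro mult_right_mono) auto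
      moreover have "qf (H x) v / (c s)^3 - qf (H x) v = (1 / (c s)^3 - 1) * qf (H x) v" by (simp add: algebra_simps)
      ultimately have m1: "(1 - (c s)^3) * qf (H x) v \<le> a s * qf (H x) v"
        and m2: "qf (H x) v / (c s)^3 - qf (H x) v = a s * qf (H x) v" by (simp_all add: a_def)
      have m3: "(1 - (c s)^3) * qf (H x) v = qf (H x) v - (c s)^3 * qf (H x) v" by (simp add: algebra_simps)
      have "qf (H (x + s *\<^sub>R d) - H x) v = qf (H (x + s *\<^sub>R d)) v - qf (H x) v" by (rule qf_mdiff)
      thus ?thesis using m1 m2 m3 u1 lo by (simp only: abs_le_iff) linarith
    qed
    have "\<bar>F' s\<bar> \<le> a s * sqrt (qf (H x) w) * sqrt (qf (H x) d)"
      unfolding F'_def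
      by (rule bil_bound[OF symm_diff[OF H_symm[OF path[OF s]] H_symm[OF x]] H_symm[OF x] pd_H[OF x] b])
    thus ?thesis by (simp add: nw_def r_def)
  qed
  define Bf where "Bf s = nw * (1 / (2 * (c s)^2) - s * r)" for s
  have dc: "(c has_real_derivative (- r)) (at s)" for s
    unfolding c_def by (auto intro!: derivative_eq_intros)
  have dB: "(Bf has_real_derivative (a s * nw * r)) (at s)" if s: "0 \<le> s" "s \<le> 1" for s
  proof -
    have dc2: "((\<lambda>s. 2 * (c s)^2) has_real_derivative (2 * (2 * (- r * c s)))) (at s)"
      using DERIV_cmult[OF DERIV_power[OF dc[of s], of 2], of 2] by simp
    have d1: "((\<lambda>s. 1 / (2 * (c s)^2)) has_real_derivative
        ((0 * (2 * (c s)^2) - 1 * (2 * (2 * (- r * c s)))) / ((2 * (c s)^2) * (2 * (c s)^2)))) (at s)"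
      by (rule DERIV_divide[OF DERIV_const dc2]) (use cpos[OF s] in simp)
    have dd: "(Bf has_real_derivative nw * ((0 * (2 * (c s)^2) - 1 * (2 * (2 * (- r * c s)))) / ((2 * (c s)^2) * (2 * (c s)^2)) - 1 * r)) (at s)"
      unfolding Bf_def by (intro DERIV_cmult DERIV_diff d1 DERIV_cmult_right DERIV_ident)
    have eq: "nw * ((0 * (2 * (c s)^2) - 1 * (2 * (2 * (- r * c s)))) / ((2 * (c s)^2) * (2 * (c s)^2)) - 1 * r)
        = a s * nw * r"
      using cpos[OF s] by (simp add: a_def field_simps power2_eq_square power3_eq_cube)
    show ?thesis using dd unfolding eq .
  qed
  have up: "F 1 - F 0 \<le> Bf 1 - Bf 0"
  proof -
    have "Bf 0 - F 0 \<le> Bf 1 - F 1"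
    proof (rule DERIV_nonneg_imp_nondecreasing[of 0 1])
      fix s :: real assume s: "0 \<le> s" "s \<le> 1"
      have "((\<lambda>s. Bf s - F s) has_real_derivative (a s * nw * r - F' s)) (at s)"
        by (intro DERIV_diff dB dF s)
      moreover have "0 \<le> a s * nw * r - F' s" using F'b[OF s] by simp
      ultimately show "\<exists>y. ((\<lambda>s. Bf s - F s) has_real_derivative y) (at s) \<and> 0 \<le> y" by blast
    qed simp
    thus ?thesis by simp
  qed
  have lo: "F 0 - F 1 \<le> Bf 1 - Bf 0"
  proof -
    have "Bf 0 + F 0 \<le> Bf 1 + F 1"
    proof (rule DERIV_nonneg_imp_nondecreasing[of 0 1])
      fix s :: real assume s: "0 \<le> s" "s \<le> 1"
      have "((\<lambda>s. Bf s + F s) has_real_derivative (a s * nw * r + F' s)) (at s)"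
        by (intro DERIV_add dB dF s)
      moreover have "0 \<le> a s * nw * r + F' s" using F'b[OF s] by simp
      ultimately show "\<exists>y. ((\<lambda>s. Bf s + F s) has_real_derivative y) (at s) \<and> 0 \<le> y" by blast
    qed simp
    thus ?thesis by simp
  qed
  have FF: "F 1 - F 0 = w \<bullet> (g (x + d) - g x - H x *v d)"
    by (simp add: F_def inner_diff_right)
  have BB: "Bf 1 - Bf 0 = nw * (1 / (2 * (1 - r)^2) - 1/2 - r)"
    by (simp add: Bf_def c_def algebra_simps)
  have lo': "- (F 1 - F 0) \<le> Bf 1 - Bf 0" using lo by simp
  show ?thesis using up lo' unfolding FF BB by (simp add: abs_le_iff nw_def r_def)
qed

end

lemma minv_right: "invertible M \<Longrightarrow> (M::real^'n^'n) *v (matrix_inv M *v v) = v"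
proof -
  assume "invertible M"
  hence "M ** matrix_inv M = mat 1 \<and> matrix_inv M ** M = mat 1"
    unfolding invertible_def matrix_inv_def by (rule someI_ex)
  thus ?thesis by (simp add: matrix_vector_mul_assoc)
qed

lemma minv_left: "invertible M \<Longrightarrow> matrix_inv (M::real^'n^'n) *v (M *v v) = v"
proof -
  assume "invertible M"
  hence "M ** matrix_inv M = mat 1 \<and> matrix_inv M ** M = mat 1"
    unfolding invertible_def matrix_inv_def by (rule someI_ex)
  thus ?thesis by (simp add: matrix_vector_mul_assoc)
qed

lemma transpose_orth: "(dx::real^'n) \<bullet> (transpose (A::real^'n^'m) *v dy) = (A *v dx) \<bullet> dy"
proof -
  have "(dy v* A) \<bullet> dx = dy \<bullet> (A *v dx)" by (rule dot_lmul_matrix)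
  thus ?thesis by (simp add: inner_commute)
qed

context scb begin

lemma dn_qf:
  assumes "y \<in> U"
  shows "dual_local_norm H y v = sqrt (qf (H y) (matrix_inv (H y) *v v))"
  using minv_right[OF Hinv[OF assms], of v]
  by (metis dual_local_norm_def inner_commute qf_def)

lemma dn_nonneg: "y \<in> U \<Longrightarrow> 0 \<le> dual_local_norm H y v"
  using dn_qf psd_H by simp

lemma dn_cs:
  assumes "y \<in> U"
  shows "\<bar>w \<bullet> v\<bar> \<le> dual_local_norm H y v * sqrt (qf (H y) w)"
proof -
  define z where "z = matrix_inv (H y) *v v"
  have v: "v = H y *v z" using minv_right[OF Hinv[OF assms], of v] by (simp add: z_def)
  have "\<bar>w \<bullet> (H y *v z)\<bar> \<le> sqrt (qf (H y) w) * sqrt (qf (H y) z)"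
    by (rule qf_cs_abs[OF H_symm[OF assms]]) (use psd_H[OF assms] in \<open>simp add: psd_def\<close>)
  hence "\<bar>w \<bullet> v\<bar> \<le> sqrt (qf (H y) w) * sqrt (qf (H y) z)" using v by simp
  moreover have "dual_local_norm H y v = sqrt (qf (H y) z)" using dn_qf[OF assms, of v] by (simp only: z_def)
  ultimately show ?thesis by (simp only: mult.commute)
qed

lemma dn_char:
  assumes y: "y \<in> U" and b: "0 \<le> \<beta>" and h: "\<And>w. \<bar>w \<bullet> v\<bar> \<le> \<beta> * sqrt (qf (H y) w)"
  shows "dual_local_norm H y v \<le> \<beta>"
proof -
  define z where "z = matrix_inv (H y) *v v"
  have v: "v = H y *v z" using minv_right[OF Hinv[OF y], of v] by (simp add: z_def)
  have q: "qf (H y) z = z \<bullet> v" by (simp add: qf_def v)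
  define n where "n = sqrt (qf (H y) z)"
  have n0: "0 \<le> n" using psd_H[OF y] by (simp add: n_def)
  have nn: "n * n = z \<bullet> v" using psd_H[OF y, of z] q by (simp add: n_def)
  have "n * n \<le> \<beta> * n" using h[of z] nn n_def by simp
  hence "n \<le> \<beta>" using n0 b by (cases "n = 0") (auto simp: mult_le_cancel_right)
  moreover have "dual_local_norm H y v = n" using dn_qf[OF y, of v] by (simp only: z_def n_def)
  ultimately show ?thesis by simp
qed

lemma dn_tri:
  assumes y: "y \<in> U"
  shows "dual_local_norm H y (v1 + v2) \<le> dual_local_norm H y v1 + dual_local_norm H y v2"
  using qf_tri[OF H_symm[OF y], of "matrix_inv (H y) *v v1" "matrix_inv (H y) *v v2"] psd_H[OF y]
  by (simp add: dn_qf[OF y] matrix_vector_right_distrib psd_def)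

lemma dn_scale:
  assumes y: "y \<in> U"
  shows "dual_local_norm H y (c *\<^sub>R v) = \<bar>c\<bar> * dual_local_norm H y v"
  by (simp add: dn_qf[OF y] matrix_vector_mult_scaleR qf_sqrt_scale)

lemma dn_change:
  assumes y1: "y1 \<in> U" and y2: "y2 \<in> U" and c: "0 < c" and cmp: "\<And>h. c * qf (H y1) h \<le> qf (H y2) h"
  shows "dual_local_norm H y2 v \<le> dual_local_norm H y1 v / sqrt c"
proof (rule dn_char[OF y2])
  show "0 \<le> dual_local_norm H y1 v / sqrt c" using dn_nonneg[OF y1] c by simp
  fix w
  have "sqrt (qf (H y1) w) \<le> sqrt (qf (H y2) w) / sqrt c"
  proof -
    have "qf (H y1) w \<le> qf (H y2) w / c" using cmp[of w] c by (simp add: le_divide_eq mult.commute)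
    hence "sqrt (qf (H y1) w) \<le> sqrt (qf (H y2) w / c)" by (rule real_sqrt_le_mono)
    thus ?thesis by (simp add: real_sqrt_divide)
  qed
  hence "dual_local_norm H y1 v * sqrt (qf (H y1) w) \<le> dual_local_norm H y1 v * (sqrt (qf (H y2) w) / sqrt c)"
    using dn_nonneg[OF y1] by (intro mult_left_mono) auto
  hence "\<bar>w \<bullet> v\<bar> \<le> dual_local_norm H y1 v * (sqrt (qf (H y2) w) / sqrt c)"
    using dn_cs[OF y1, of w v] by linarith
  moreover have "dual_local_norm H y1 v * (sqrt (qf (H y2) w) / sqrt c) = dual_local_norm H y1 v / sqrt c * sqrt (qf (H y2) w)"
    by simp
  ultimately show "\<bar>w \<bullet> v\<bar> \<le> dual_local_norm H y1 v / sqrt c * sqrt (qf (H y2) w)" by simp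
qed

end

lemma rho_eq:
  fixes r :: real assumes "r < 1"
  shows "1 / (2 * (1 - r)^2) - 1/2 - r = r^2 * (3 - 2 * r) / (2 * (1 - r)^2)"
proof -
  have p: "2 * (1 - r)^2 > 0" using assms by simp
  have "1 / (2 * (1 - r)^2) - 1/2 - r = (1 - (1 + 2 * r) * (1 - r)^2) / (2 * (1 - r)^2)"
    using p by (simp add: field_simps)
  also have "1 - (1 + 2 * r) * (1 - r)^2 = r^2 * (3 - 2 * r)" by (simp add: power2_eq_square algebra_simps)
  finally show ?thesis .
qed

lemma rho_nonneg:
  fixes r :: real assumes "0 \<le> r" "r < 1"
  shows "0 \<le> 1 / (2 * (1 - r)^2) - 1/2 - r"
  unfolding rho_eq[OF assms(2)] using assms by simp

lemma rho_le:
  fixes r :: real assumes "0 \<le> r" "r \<le> 1/4"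
  shows "1 / (2 * (1 - r)^2) - 1/2 - r \<le> 8/3 * r^2"
proof -
  have r1: "r < 1" using assms by simp
  have a: "9/16 \<le> (1 - r)^2"
  proof -
    have "3/4 \<le> 1 - r" using assms by simp
    hence "(3/4)^2 \<le> (1 - r)^2" by (rule power_mono) simp
    thus ?thesis by (simp add: power2_eq_square)
  qed
  have "r^2 * (3 - 2 * r) \<le> r^2 * 3" using assms by (simp add: mult_left_mono)
  hence "r^2 * (3 - 2 * r) / (2 * (1 - r)^2) \<le> r^2 * 3 / (2 * (1 - r)^2)"
    using a by (intro divide_right_mono) auto
  also have "\<dots> \<le> r^2 * 3 / (2 * (9/16))"
    using a assms by (intro divide_left_mono) auto
  also have "\<dots> = 8/3 * r^2" by simp
  finally show ?thesis unfolding rho_eq[OF r1] .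
qed

lemma numeric:
  fixes \<eta> \<alpha> r \<nu> \<tau> :: real
  assumes "0 < \<eta>" "\<eta> \<le> 1/4" "0 < \<alpha>" "\<alpha> \<le> 1" "0 \<le> r" "r \<le> \<alpha> * \<eta>" "0 \<le> \<nu>" "0 < \<tau>"
  defines "\<theta> \<equiv> (\<eta> / 2) / (sqrt \<nu> + 1)"
  shows "((1 - \<alpha>) * \<eta> * \<tau> + \<tau> * (1 / (2 * (1 - r)^2) - 1/2 - r)) / (1 - r)^2 + \<theta> * \<tau> * sqrt \<nu>
     \<le> 2 * \<eta> * ((1 - \<theta>) * \<tau>)"
proof -
  have r\<eta>: "r \<le> \<eta>" using mult_left_le_one_le[of \<eta> \<alpha>] assms by linarith
  have r4: "r \<le> 1/4" using r\<eta> assms by simp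
  define \<rho> where "\<rho> = 1 / (2 * (1 - r)^2) - 1/2 - r"
  have \<rho>: "\<rho> \<le> 8/3 * r^2" unfolding \<rho>_def by (rule rho_le) (use assms r4 in auto)
  have sn: "0 \<le> sqrt \<nu>" using assms by simp
  have th: "\<theta> * sqrt \<nu> + 2 * \<eta> * \<theta> \<le> \<eta> / 2"
  proof -
    have "\<theta> * sqrt \<nu> + 2 * \<eta> * \<theta> = \<theta> * (sqrt \<nu> + 2 * \<eta>)" by (simp add: algebra_simps)
    also have "\<dots> \<le> \<theta> * (sqrt \<nu> + 1)" using assms by (intro mult_left_mono) (auto simp: \<theta>_def)
    also have "\<dots> = \<eta> / 2"
    proof -
      have "sqrt \<nu> + 1 \<noteq> 0" using sn by linarith
      moreover have "\<And>q::real. q \<noteq> 0 \<Longrightarrow> (\<eta> / 2) / q * q = \<eta> / 2" by simp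
      ultimately show ?thesis unfolding \<theta>_def by blast
    qed
    finally show ?thesis .
  qed
  have b: "(1 - \<alpha>) * \<eta> + \<rho> \<le> 3/2 * \<eta> * (1 - r)^2"
  proof -
    have f1: "r \<le> \<alpha> * \<eta>" using assms by simp
    have f2: "r^2 \<le> 1/4 * r"
    proof -
      have "r * r \<le> r * (1/4)" by (rule mult_left_mono[OF r4]) (use assms in simp)
      thus ?thesis by (simp add: power2_eq_square)
    qed
    have f3: "\<eta> * r \<le> 1/4 * r" by (rule mult_right_mono) (use assms in simp_all)
    have f4: "3/2 * \<eta> - 3 * (\<eta> * r) \<le> 3/2 * (\<eta> * (1 - r)^2)"
    proof -
      have "\<eta> * (1 - 2 * r) \<le> \<eta> * (1 - r)^2"
        using assms by (intro mult_left_mono) (auto simp: power2_eq_square algebra_simps)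
      thus ?thesis by (simp add: algebra_simps)
    qed
    have "\<eta> - \<alpha> * \<eta> + \<rho> \<le> 3/2 * (\<eta> * (1 - r)^2)" using f1 f2 f3 f4 \<rho> r\<eta> assms(5) by linarith
    moreover have "(1 - \<alpha>) * \<eta> = \<eta> - \<alpha> * \<eta>" by (simp add: algebra_simps)
    moreover have "3/2 * \<eta> * (1 - r)^2 = 3/2 * (\<eta> * (1 - r)^2)" by simp
    ultimately show ?thesis by linarith
  qed
  have r1: "0 < (1 - r)^2" using r4 by simp
  have "((1 - \<alpha>) * \<eta> * \<tau> + \<tau> * \<rho>) / (1 - r)^2 = \<tau> * (((1 - \<alpha>) * \<eta> + \<rho>) / (1 - r)^2)"
    by (simp add: algebra_simps add_divide_distrib)
  also have "\<dots> \<le> \<tau> * (3/2 * \<eta>)"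
    using b r1 assms by (intro mult_left_mono) (auto simp: divide_le_eq mult.commute)
  finally have "((1 - \<alpha>) * \<eta> * \<tau> + \<tau> * \<rho>) / (1 - r)^2 \<le> \<tau> * (3/2 * \<eta>)" .
  moreover have "\<tau> * (\<theta> * sqrt \<nu> + 2 * \<eta> * \<theta>) \<le> \<tau> * (\<eta> / 2)" using th assms by (intro mult_left_mono) auto
  moreover have "\<tau> * (\<theta> * sqrt \<nu> + 2 * \<eta> * \<theta>) = \<theta> * \<tau> * sqrt \<nu> + 2 * \<eta> * \<theta> * \<tau>"
    by (simp add: algebra_simps)
  moreover have "2 * \<eta> * ((1 - \<theta>) * \<tau>) = 2 * \<eta> * \<tau> - 2 * \<eta> * \<theta> * \<tau>"
    by (simp add: algebra_simps)
  moreover have "\<tau> * (3/2 * \<eta>) = 3/2 * \<eta> * \<tau>" by simp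
  moreover have "\<tau> * (\<eta> / 2) = 1/2 * \<eta> * \<tau>" by simp
  ultimately show ?thesis unfolding \<rho>_def[symmetric] by linarith
qed


lemma mv_neg: "(M::real^'n^'m) *v (- v) = - (M *v v)"
proof -
  have "M *v ((-1) *\<^sub>R v) = (-1) *\<^sub>R (M *v v)" by (rule matrix_vector_mult_scaleR)
  thus ?thesis by simp
qed

theorem lemmaB1:
  fixes K :: "(real^'n) set" and f :: "real^'n \<Rightarrow> real" and g :: "real^'n \<Rightarrow> real^'n"
    and H :: "real^'n \<Rightarrow> real^'n^'n" and \<nu> :: real
    and A :: "real^'n^'m" and b :: "real^'m" and c :: "real^'n"
    and \<eta> \<tau> \<alpha> :: real and x dx s ds :: "real^'n" and y dy :: "real^'m"
  assumes "proper_cone K"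
    and "lhscb K f g H \<nu>"
    and "rank A = CARD('m)"
    and "0 < \<eta>" and "\<eta> \<le> 1/4"
    and "0 < \<tau>"
    and "(x, y, s) \<in> neighborhood K A b c g H \<eta> \<tau>"
    and "newton_system A g H \<tau> x y s dx dy ds"
    and "0 < \<alpha>" and "\<alpha> \<le> 1"
  shows "let \<theta> = (\<eta> / 2) / (sqrt \<nu> + 1);
             xp = x + \<alpha> *\<^sub>R dx; sp = s + \<alpha> *\<^sub>R ds; yp = y + \<alpha> *\<^sub>R dy;
             \<tau>p = (1 - \<theta>) * \<tau>
         in xp \<in> interior K \<and> dual_local_norm H xp (sp + \<tau>p *\<^sub>R g xp) \<le> 2 * \<eta> * \<tau>p"
proof -
  note LL = assms(2)[unfolded lhscb_def]
  note L1 = LL[THEN conjunct1]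
  note L2 = LL[THEN conjunct2, THEN conjunct1]
  note L3 = LL[THEN conjunct2, THEN conjunct2, THEN conjunct1]
  note L4 = LL[THEN conjunct2, THEN conjunct2, THEN conjunct2, THEN conjunct1]
  note L5 = LL[THEN conjunct2, THEN conjunct2, THEN conjunct2, THEN conjunct2, THEN conjunct1]
  note L6 = LL[THEN conjunct2, THEN conjunct2, THEN conjunct2, THEN conjunct2, THEN conjunct2, THEN conjunct1]
  note L7 = LL[THEN conjunct2, THEN conjunct2, THEN conjunct2, THEN conjunct2, THEN conjunct2, THEN conjunct2, THEN conjunct1]
  note L8 = LL[THEN conjunct2, THEN conjunct2, THEN conjunct2, THEN conjunct2, THEN conjunct2, THEN conjunct2, THEN conjunct2, THEN conjunct1]
  obtain D3 where D3: "\<forall>x\<in>interior K. (H has_derivative D3 x) (at x) \<and>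
         (\<forall>h. \<bar>h \<bullet> (D3 x h *v h)\<bar> \<le> 2 * (h \<bullet> (H x *v h)) powr (3/2))"
    using bchoice[OF L4] by blast
  have conv: "convex_on (interior K) f"
  proof (rule convex_onI)
    show "convex (interior K)" using L1 by (simp add: strictly_convex_on_def)
    fix t :: real and u v assume t: "0 < t" "t < 1" and uv: "u \<in> interior K" "v \<in> interior K"
    show "f ((1 - t) *\<^sub>R u + t *\<^sub>R v) \<le> (1 - t) * f u + t * f v"
    proof (cases "u = v")
      case True
      have "(1 - t) *\<^sub>R u + t *\<^sub>R u = u" by (simp add: algebra_simps)
      moreover have "(1 - t) * f u + t * f u = f u" by (simp add: algebra_simps)
      ultimately show ?thesis using True by simp
    next
      case False
      have "f ((1 - t) *\<^sub>R u + t *\<^sub>R v) < (1 - t) * f u + t * f v"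
        using L1 t uv False unfolding strictly_convex_on_def by blast
      thus ?thesis by simp
    qed
  qed
  interpret B: scb "interior K" f g H D3
    by unfold_locales (use L2 L3 L5 D3 conv in auto)
  have xU: "x \<in> interior K" and nb: "dual_local_norm H x (s + \<tau> *\<^sub>R g x) \<le> \<eta> * \<tau>"
    using assms(7) by (auto simp: neighborhood_def strictly_feasible_def)
  have N1: "A *v dx = 0" and N2: "transpose A *v dy + ds = 0"
    and N3: "\<tau> *\<^sub>R (H x *v dx) + ds = - (s + \<tau> *\<^sub>R g x)"
    using assms(8) by (auto simp: newton_system_def)
  have clK: "closed K" using assms(1) by (simp add: proper_cone_def)
  define v0 where "v0 = s + \<tau> *\<^sub>R g x"
  define d where "d = \<alpha> *\<^sub>R dx"
  define r where "r = sqrt (qf (H x) d)"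
  define R where "R = g (x + d) - g x - H x *v d"
  define \<theta> where "\<theta> = (\<eta> / 2) / (sqrt \<nu> + 1)"
  have sH: "symm (H x)" and pH: "psd (H x)" using B.H_symm[OF xU] B.psd_H[OF xU] by (auto simp: psd_def)
  have qdx: "qf (H x) dx \<le> \<eta>^2"
  proof -
    define zs where "zs = matrix_inv (H x) *v ds"
    have Hzs: "H x *v zs = ds" unfolding zs_def by (rule minv_right[OF L5[rule_format, OF xU]])
    have ds_eq: "ds = - v0 - \<tau> *\<^sub>R (H x *v dx)" using N3 unfolding v0_def by (simp add: algebra_simps)
    have e: "\<tau> *\<^sub>R (H x *v dx) + ds = - v0" using N3 by (simp add: v0_def)
    have "v0 = - (\<tau> *\<^sub>R (H x *v dx) + ds)" using e by (metis minus_minus)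
    also have "\<dots> = (- \<tau>) *\<^sub>R (H x *v dx) - ds" by simp
    also have "\<dots> = H x *v ((- \<tau>) *\<^sub>R dx - zs)"
      by (simp only: matrix_vector_mult_diff_distrib matrix_vector_mult_scaleR Hzs)
    finally have v0eq: "v0 = H x *v ((- \<tau>) *\<^sub>R dx - zs)" .
    have z0: "matrix_inv (H x) *v v0 = (- \<tau>) *\<^sub>R dx - zs"
      unfolding v0eq by (rule minv_left[OF L5[rule_format, OF xU]])
    have orth: "dx \<bullet> ds = 0"
    proof -
      have "ds = - (transpose A *v dy)" using N2 by (simp add: eq_neg_iff_add_eq_0 add.commute)
      hence "dx \<bullet> ds = - ((A *v dx) \<bullet> dy)" using transpose_orth[of dx A dy] by simp
      thus ?thesis using N1 by simp
    qed
    have "qf (H x) ((- \<tau>) *\<^sub>R dx - zs) = \<tau>^2 * qf (H x) dx + 2 * \<tau> * (dx \<bullet> ds) + qf (H x) zs"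
      using qf_diff[OF sH, of "(- \<tau>) *\<^sub>R dx" zs] qf_scale[of "H x" "- \<tau>" dx] Hzs by simp
    hence qz: "qf (H x) ((- \<tau>) *\<^sub>R dx - zs) = \<tau>^2 * qf (H x) dx + qf (H x) zs" using orth by simp
    have "dual_local_norm H x v0 = sqrt (qf (H x) ((- \<tau>) *\<^sub>R dx - zs))"
      using B.dn_qf[OF xU, of v0] z0 by simp
    hence "sqrt (qf (H x) ((- \<tau>) *\<^sub>R dx - zs)) \<le> \<eta> * \<tau>" using nb by (simp add: v0_def)
    hence sqz: "sqrt (qf (H x) ((- \<tau>) *\<^sub>R dx - zs)) \<le> \<eta> * \<tau>" .
    have Z0: "0 \<le> qf (H x) ((- \<tau>) *\<^sub>R dx - zs)" using pH by (simp only: psd_def)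
    have "qf (H x) ((- \<tau>) *\<^sub>R dx - zs) = (sqrt (qf (H x) ((- \<tau>) *\<^sub>R dx - zs)))^2"
      using Z0 by simp
    also have "\<dots> \<le> (\<eta> * \<tau>)^2" by (rule power_mono[OF sqz]) (use Z0 in simp)
    finally have "qf (H x) ((- \<tau>) *\<^sub>R dx - zs) \<le> (\<eta> * \<tau>)^2" .
    moreover have "0 \<le> qf (H x) zs" using pH by (simp add: psd_def)
    moreover have "(\<eta> * \<tau>)^2 = \<tau>^2 * \<eta>^2" by (simp add: power_mult_distrib)
    ultimately have "\<tau>^2 * qf (H x) dx \<le> \<tau>^2 * \<eta>^2" using qz by linarith
    thus ?thesis using assms(6) by simp
  qed
  have sdx: "sqrt (qf (H x) dx) \<le> \<eta>"
    using real_sqrt_le_mono[OF qdx] assms(4) by simp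
  have r0: "0 \<le> r" using pH by (simp add: r_def psd_def)
  have req: "r = \<alpha> * sqrt (qf (H x) dx)" using assms(9) by (simp add: r_def d_def qf_sqrt_scale)
  have ra: "r \<le> \<alpha> * \<eta>" unfolding req using sdx assms(9) by (intro mult_left_mono) auto
  have a\<eta>: "\<alpha> * \<eta> \<le> 1/4" using mult_left_le_one_le[of \<eta> \<alpha>] assms(4,5,9,10) by linarith
  have r1: "r < 1" using ra a\<eta> by simp
  have r1': "sqrt (qf (H x) d) < 1" using r1 by (simp add: r_def)
  have path: "\<And>t. 0 \<le> t \<Longrightarrow> t \<le> 1 \<Longrightarrow> x + t *\<^sub>R d \<in> interior K"
    using B.dikin[OF xU r1' clK refl L6] by blast
  have xpU: "x + d \<in> interior K" using path[of 1] by simp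
  have ds_eq: "ds = - v0 - \<tau> *\<^sub>R (H x *v dx)" using N3 unfolding v0_def by (simp add: algebra_simps)
  have Hd: "H x *v d = \<alpha> *\<^sub>R (H x *v dx)" by (simp add: d_def matrix_vector_mult_scaleR)
  have decomp: "s + \<alpha> *\<^sub>R ds + ((1 - \<theta>) * \<tau>) *\<^sub>R g (x + d) =
      ((1 - \<alpha>) *\<^sub>R v0 + \<tau> *\<^sub>R R) + (- (\<theta> * \<tau>)) *\<^sub>R g (x + d)"
    unfolding ds_eq R_def Hd v0_def by (simp add: algebra_simps)
  define u where "u = (1 - \<alpha>) *\<^sub>R v0 + \<tau> *\<^sub>R R"
  define \<rho> where "\<rho> = 1 / (2 * (1 - r)^2) - 1/2 - r"
  have \<rho>0: "0 \<le> \<rho>" unfolding \<rho>_def by (rule rho_nonneg[OF r0 r1])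
  have dR: "dual_local_norm H x R \<le> \<rho>"
  proof (rule B.dn_char[OF xU \<rho>0])
    fix w
    show "\<bar>w \<bullet> R\<bar> \<le> \<rho> * sqrt (qf (H x) w)"
      using B.rem_bound[OF xU r1' path, of w] by (simp add: R_def \<rho>_def r_def mult.commute)
  qed
  have du: "dual_local_norm H x u \<le> (1 - \<alpha>) * \<eta> * \<tau> + \<tau> * \<rho>"
  proof -
    have "dual_local_norm H x u \<le> dual_local_norm H x ((1 - \<alpha>) *\<^sub>R v0) + dual_local_norm H x (\<tau> *\<^sub>R R)"
      unfolding u_def by (rule B.dn_tri[OF xU])
    also have "\<dots> = (1 - \<alpha>) * dual_local_norm H x v0 + \<tau> * dual_local_norm H x R"
      using assms(6,10) by (simp add: B.dn_scale[OF xU])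
    also have "\<dots> \<le> (1 - \<alpha>) * (\<eta> * \<tau>) + \<tau> * \<rho>"
      using nb dR assms(6,10) by (intro add_mono mult_left_mono) (auto simp: v0_def)
    finally show ?thesis by simp
  qed
  have c3: "0 < (1 - r)^3" using r1 by simp
  have cmp: "(1 - r)^3 * qf (H x) h \<le> qf (H (x + d)) h" for h
    using B.hess_cmp(1)[OF xU r1' path, of 1 h] by (simp add: r_def)
  have sq: "(1 - r)^2 \<le> sqrt ((1 - r)^3)"
  proof -
    have "(1 - r)^4 \<le> (1 - r)^3" using r0 r1 by (intro power_decreasing) auto
    hence "sqrt ((1 - r)^4) \<le> sqrt ((1 - r)^3)" by (rule real_sqrt_le_mono)
    moreover have "sqrt ((1 - r)^4) = (1 - r)^2"
    proof -
      have "(1 - r)^4 = ((1 - r)^2)^2" by (simp flip: power_mult)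
      hence "sqrt ((1 - r)^4) = \<bar>(1 - r)^2\<bar>" by (simp only: real_sqrt_abs)
      thus ?thesis by simp
    qed
    ultimately show ?thesis by simp
  qed
  have dup: "dual_local_norm H (x + d) u \<le> ((1 - \<alpha>) * \<eta> * \<tau> + \<tau> * \<rho>) / (1 - r)^2"
  proof -
    have "dual_local_norm H (x + d) u \<le> dual_local_norm H x u / sqrt ((1 - r)^3)"
      by (rule B.dn_change[OF xU xpU c3 cmp])
    also have "\<dots> \<le> dual_local_norm H x u / (1 - r)^2"
      using sq B.dn_nonneg[OF xU, of u] r1 by (intro divide_left_mono) auto
    also have "\<dots> \<le> ((1 - \<alpha>) * \<eta> * \<tau> + \<tau> * \<rho>) / (1 - r)^2"
      using du r1 by (intro divide_right_mono) auto
    finally show ?thesis .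
  qed
  have gx: "g y \<bullet> (matrix_inv (H y) *v g y) = qf (H y) (matrix_inv (H y) *v g y)" if "y \<in> interior K" for y
    using minv_right[OF L5[rule_format, OF that], of "g y"] by (metis inner_commute qf_def)
  have \<nu>0: "0 \<le> \<nu>"
  proof -
    have "g x \<bullet> (matrix_inv (H x) *v g x) \<le> \<nu>" unfolding L8 by (rule cSUP_upper[OF xU L7])
    thus ?thesis using gx[OF xU] B.psd_H[OF xU, of "matrix_inv (H x) *v g x"] by linarith
  qed
  have \<theta>0: "0 \<le> \<theta>" using assms(4) \<nu>0 by (simp add: \<theta>_def)
  have dg: "dual_local_norm H (x + d) (g (x + d)) \<le> sqrt \<nu>"
  proof -
    have "g (x + d) \<bullet> (matrix_inv (H (x + d)) *v g (x + d)) \<le> \<nu>" unfolding L8 by (rule cSUP_upper[OF xpU L7])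
    thus ?thesis unfolding dual_local_norm_def by (rule real_sqrt_le_mono)
  qed
  have dgt: "dual_local_norm H (x + d) ((- (\<theta> * \<tau>)) *\<^sub>R g (x + d)) \<le> \<theta> * \<tau> * sqrt \<nu>"
  proof -
    have "dual_local_norm H (x + d) ((- (\<theta> * \<tau>)) *\<^sub>R g (x + d)) = \<theta> * \<tau> * dual_local_norm H (x + d) (g (x + d))"
    proof -
      have f1: "dual_local_norm H (x + d) ((- (\<theta> * \<tau>)) *\<^sub>R g (x + d)) = \<bar>- (\<theta> * \<tau>)\<bar> * dual_local_norm H (x + d) (g (x + d))"
        by (rule B.dn_scale[OF xpU])
      have f2: "\<bar>- (\<theta> * \<tau>)\<bar> = \<theta> * \<tau>" using \<theta>0 assms(6) by simp
      show ?thesis by (simp only: f1 f2)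
    qed
    also have "\<dots> \<le> \<theta> * \<tau> * sqrt \<nu>" using dg \<theta>0 assms(6) by (intro mult_left_mono) auto
    finally show ?thesis .
  qed
  have total: "dual_local_norm H (x + d) (s + \<alpha> *\<^sub>R ds + ((1 - \<theta>) * \<tau>) *\<^sub>R g (x + d)) \<le> 2 * \<eta> * ((1 - \<theta>) * \<tau>)"
  proof -
    have "dual_local_norm H (x + d) (s + \<alpha> *\<^sub>R ds + ((1 - \<theta>) * \<tau>) *\<^sub>R g (x + d))
        \<le> dual_local_norm H (x + d) u + dual_local_norm H (x + d) ((- (\<theta> * \<tau>)) *\<^sub>R g (x + d))"
      unfolding decomp u_def[symmetric] by (rule B.dn_tri[OF xpU])
    also have "\<dots> \<le> ((1 - \<alpha>) * \<eta> * \<tau> + \<tau> * \<rho>) / (1 - r)^2 + \<theta> * \<tau> * sqrt \<nu>"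
      using dup dgt by simp
    also have "\<dots> \<le> 2 * \<eta> * ((1 - \<theta>) * \<tau>)"
      unfolding \<rho>_def \<theta>_def by (rule numeric) (use assms r0 ra \<nu>0 in auto)
    finally show ?thesis .
  qed
  show ?thesis
    using xpU total unfolding Let_def \<theta>_def[symmetric] d_def by simp
qed

end
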